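(* For $N\ge1$, \[\overline{Z_N}(\{u\}_N|\{w\}_N)=\frac{\prod_{j=1}^N(1-t)dw_j\prod_{j,k=1}^N(atu_j+bw_k)(eu_j+tfw_k)}{(t^2cd)^{N(N-1)/2}\prod_{1\le j<k\le N}(u_j-u_k)(w_k-w_j)}\det_{1\le j,k\le N}\Big(\frac{1}{(atu_j+bw_k)(eu_j+tfw_k)}\Big).\]
   Context: Fix complex parameters $t,a,b,c,d,e,f$, all nonzero, with $t\neq1$, satisfying $cd+af=0$ and $tcd+be=0$. The inhomogeneous $L$-operator $L_{aj}(u,w)$ on $W_a\otimes V_j$ ($\cong\mathbb{C}^2\otimes\mathbb{C}^2$, basis $|0\rangle,|1\rangle$) has matrix elements ${}_a\langle\gamma|{}_j\langle\delta|L_{aj}(u,w)|\alpha\rangle_a|\beta\rangle_j=[L(u,w)]^{\gamma\delta}_{\alpha\beta}$: $[L]^{00}_{00}=au+bw$, $[L]^{01}_{01}=atu+bw$, $[L]^{01}_{10}=(1-t)cu$, $[L]^{10}_{01}=(1-t)dw$, $[L]^{10}_{10}=eu+fw$, $[L]^{11}_{11}=eu+tfw$, all others $0$. Define $C_N(u|\{w\}_N)={}_a\langle1|L_{aN}(u,w_N)\cdots L_{a1}(u,w_1)|0\rangle_a$ on $V_1\otimes\cdots\otimes V_N$ and $\overline{Z_N}(\{u\}_N|\{w\}_N)=\langle\Omega|C_N(u_N|\{w\}_N)\cdots C_N(u_1|\{w\}_N)|1\cdots N\rangle$ with $\langle\Omega|=\langle0|^{\otimes N}$, $|1\cdots N\rangle=|1\rangle^{\otimes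 N}$. *)

theory Defs
  imports "HOL-Library.FuncSet" "Jordan_Normal_Form.Determinant"
begin

text \<open>Matrix elements [L(u,w)]^{gamma delta}_{alpha beta} of the inhomogeneous L-operator;
  basis states are encoded as the naturals 0 and 1.\<close>
definition Lop :: "complex \<Rightarrow> complex \<Rightarrow> complex \<Rightarrow> complex \<Rightarrow> complex \<Rightarrow> complex \<Rightarrow> complex
    \<Rightarrow> complex \<Rightarrow> complex \<Rightarrow> nat \<Rightarrow> nat \<Rightarrow> nat \<Rightarrow> nat \<Rightarrow> complex" where
  "Lop t a b c d e f u w \<gamma> \<delta> \<alpha> \<beta> =
     (if (\<gamma>,\<delta>,\<alpha>,\<beta>) = (0,0,0,0) then a*u + b*w
      else if (\<gamma>,\<delta>,\<alpha>,\<beta>) = (0,1,0,1) then a*t*u + b*w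
      else if (\<gamma>,\<delta>,\<alpha>,\<beta>) = (0,1,1,0) then (1-t)*c*u
      else if (\<gamma>,\<delta>,\<alpha>,\<beta>) = (1,0,0,1) then (1-t)*d*w
      else if (\<gamma>,\<delta>,\<alpha>,\<beta>) = (1,0,1,0) then e*u + f*w
      else if (\<gamma>,\<delta>,\<alpha>,\<beta>) = (1,1,1,1) then e*u + t*f*w
      else 0)"

text \<open>Basis configurations of V_1 (x) ... (x) V_N: maps {1..N} -> {0,1}.\<close>
definition configs :: "nat \<Rightarrow> (nat \<Rightarrow> nat) set" where
  "configs N = PiE {1..N} (\<lambda>_. {0,1})"

definition aux_paths :: "nat \<Rightarrow> (nat \<Rightarrow> nat) set" where
  "aux_paths N = {s \<in> PiE {0..N} (\<lambda>_. {0,1}). s 0 = 0 \<and> s N = 1}"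

text \<open>Matrix element <delta| C_N(u|{w}_N) |beta> with
  C_N = _a<1| L_{aN}(u,w_N) ... L_{a1}(u,w_1) |0>_a  (L_{a1} acts first).\<close>
definition Cop :: "complex \<Rightarrow> complex \<Rightarrow> complex \<Rightarrow> complex \<Rightarrow> complex \<Rightarrow> complex \<Rightarrow> complex
    \<Rightarrow> nat \<Rightarrow> complex \<Rightarrow> (nat \<Rightarrow> complex) \<Rightarrow> (nat \<Rightarrow> nat) \<Rightarrow> (nat \<Rightarrow> nat) \<Rightarrow> complex" where
  "Cop t a b c d e f N u w \<delta> \<beta> =
     (\<Sum>s\<in>aux_paths N. \<Prod>j=1..N. Lop t a b c d e f u (w j) (s j) (\<delta> j) (s (j-1)) (\<beta> j))"

text \<open>Components of C_N(u_k|w)...C_N(u_1|w)|1...1>.\<close>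
fun Zvec :: "complex \<Rightarrow> complex \<Rightarrow> complex \<Rightarrow> complex \<Rightarrow> complex \<Rightarrow> complex \<Rightarrow> complex
    \<Rightarrow> nat \<Rightarrow> (nat \<Rightarrow> complex) \<Rightarrow> (nat \<Rightarrow> complex) \<Rightarrow> nat \<Rightarrow> (nat \<Rightarrow> nat) \<Rightarrow> complex" where
  "Zvec t a b c d e f N u w 0 \<delta> = (if \<delta> = restrict (\<lambda>_. 1) {1..N} then 1 else 0)"
| "Zvec t a b c d e f N u w (Suc k) \<delta> =
     (\<Sum>\<beta>\<in>configs N. Cop t a b c d e f N (u (Suc k)) w \<delta> \<beta> * Zvec t a b c d e f N u w k \<beta>)"

text \<open>Zbar_N({u}_N|{w}_N) = <Omega| C_N(u_N|w) ... C_N(u_1|w) |1...N>.\<close>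
definition Zbar :: "complex \<Rightarrow> complex \<Rightarrow> complex \<Rightarrow> complex \<Rightarrow> complex \<Rightarrow> complex \<Rightarrow> complex
    \<Rightarrow> nat \<Rightarrow> (nat \<Rightarrow> complex) \<Rightarrow> (nat \<Rightarrow> complex) \<Rightarrow> complex" where
  "Zbar t a b c d e f N u w = Zvec t a b c d e f N u w N (restrict (\<lambda>_. 0) {1..N})"

end

theory Submission
  imports Defs "HOL-Computational_Algebra.Polynomial"
begin

definition pf :: "(complex \<Rightarrow> complex) \<Rightarrow> nat \<Rightarrow> bool" where
  "pf F n \<longleftrightarrow> (\<exists>p. degree p \<le> n \<and> (\<forall>x. F x = poly p x))"

lemma pf_const[intro]: "pf (\<lambda>x. k) n"
  unfolding pf_def by (rule exI[of _ "[:k:]"]) auto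

lemma pf_id[intro]: "1 \<le> n \<Longrightarrow> pf (\<lambda>x. x) n"
  unfolding pf_def by (rule exI[of _ "[:0,1:]"]) auto

lemma pf_mono: "pf F m \<Longrightarrow> m \<le> n \<Longrightarrow> pf F n"
  unfolding pf_def by (meson order_trans)

lemma pf_add[intro]: "pf F n \<Longrightarrow> pf G n \<Longrightarrow> pf (\<lambda>x. F x + G x) n"
  unfolding pf_def
proof (elim exE conjE)
  fix p q assume "degree p \<le> n" "\<forall>x. F x = poly p x" "degree q \<le> n" "\<forall>x. G x = poly q x"
  then show "\<exists>r. degree r \<le> n \<and> (\<forall>x. F x + G x = poly r x)"
    by (intro exI[of _ "p + q"]) (auto intro: degree_add_le)
qed

lemma pf_uminus[intro]: "pf F n \<Longrightarrow> pf (\<lambda>x. - F x) n"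
  unfolding pf_def
proof (elim exE conjE)
  fix p assume "degree p \<le> n" "\<forall>x. F x = poly p x"
  then show "\<exists>r. degree r \<le> n \<and> (\<forall>x. - F x = poly r x)"
    by (intro exI[of _ "- p"]) auto
qed

lemma pf_diff[intro]: "pf F n \<Longrightarrow> pf G n \<Longrightarrow> pf (\<lambda>x. F x - G x) n"
  using pf_add[of F n "\<lambda>x. - G x"] pf_uminus[of G n] by simp

lemma pf_mult: "pf F m \<Longrightarrow> pf G n \<Longrightarrow> pf (\<lambda>x. F x * G x) (m + n)"
  unfolding pf_def
proof (elim exE conjE)
  fix p q assume "degree p \<le> m" "\<forall>x. F x = poly p x" "degree q \<le> n" "\<forall>x. G x = poly q x"
  then show "\<exists>r. degree r \<le> m + n \<and> (\<forall>x. F x * G x = poly r x)"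
    by (intro exI[of _ "p * q"]) (auto intro: order.trans[OF degree_mult_le])
qed

lemma pf_mult': "pf F m \<Longrightarrow> pf G n \<Longrightarrow> m + n \<le> k \<Longrightarrow> pf (\<lambda>x. F x * G x) k"
  using pf_mult pf_mono by blast

lemma pf_sum: "finite A \<Longrightarrow> (\<And>i. i \<in> A \<Longrightarrow> pf (F i) n) \<Longrightarrow> pf (\<lambda>x. \<Sum>i\<in>A. F i x) n"
proof (induction A rule: finite_induct)
  case empty then show ?case by (simp add: pf_const)
next
  case (insert a A) then show ?case by (simp add: pf_add)
qed

lemma pf_prod: "finite A \<Longrightarrow> (\<And>i. i \<in> A \<Longrightarrow> pf (F i) (d i)) \<Longrightarrow> pf (\<lambda>x. \<Prod>i\<in>A. F i x) (\<Sum>i\<in>A. d i)"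
proof (induction A rule: finite_induct)
  case empty then show ?case by (simp add: pf_const)
next
  case (insert a A) then show ?case by (simp add: pf_mult)
qed

lemma pf_prod': "finite A \<Longrightarrow> (\<And>i. i \<in> A \<Longrightarrow> pf (F i) (d i)) \<Longrightarrow> (\<Sum>i\<in>A. d i) \<le> n \<Longrightarrow> pf (\<lambda>x. \<Prod>i\<in>A. F i x) n"
  using pf_prod pf_mono by blast

lemma pf_any: "pf F n \<Longrightarrow> \<exists>m. pf F m" by blast

lemma pf_roots:
  assumes "pf F n" "finite S" "n < card S" "\<And>x. x \<in> S \<Longrightarrow> F x = 0"
  shows "F y = 0"
proof -
  from assms(1) obtain p where p: "degree p \<le> n" "\<And>x. F x = poly p x" unfolding pf_def by auto
  have "p = 0"
  proof (rule ccontr)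
    assume "p \<noteq> 0"
    then have "card {x. poly p x = 0} \<le> degree p" by (rule card_poly_roots_bound)
    moreover have "S \<subseteq> {x. poly p x = 0}" using assms(4) p(2) by auto
    moreover have "finite {x. poly p x = 0}" using \<open>p \<noteq> 0\<close> poly_roots_finite by blast
    ultimately have "card S \<le> degree p" by (meson card_mono order_trans)
    then show False using assms(3) p(1) by linarith
  qed
  then show ?thesis using p by simp
qed

lemma pf_cofinite:
  assumes "pf F n" "finite B" "\<And>x. x \<notin> B \<Longrightarrow> F x = 0"
  shows "F y = 0"
proof -
  from assms(1) obtain p where p: "degree p \<le> n" "\<And>x. F x = poly p x" unfolding pf_def by auto
  have "p = 0"
  proof (rule ccontr)
    assume "p \<noteq> 0"
    then have fin: "finite {x. poly p x = 0}" using poly_roots_finite by blast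
    have "UNIV \<subseteq> B \<union> {x. poly p x = 0}" using assms(3) p(2) by auto
    then have "finite (UNIV :: complex set)" using fin assms(2) by (meson finite_UnI finite_subset)
    then show False by (simp add: infinite_UNIV_char_0)
  qed
  then show ?thesis using p by simp
qed


locale sv =
  fixes t a b c d e f :: complex
  assumes tnz: "t \<noteq> 0" and anz: "a \<noteq> 0" and bnz: "b \<noteq> 0" and cnz: "c \<noteq> 0"
    and dnz: "d \<noteq> 0" and enz: "e \<noteq> 0" and fnz: "f \<noteq> 0" and t1: "t \<noteq> 1"
    and rel1: "c*d + a*f = 0" and rel2: "t*c*d + b*e = 0"
begin

abbreviation "L \<equiv> Lop t a b c d e f"

fun Trow :: "complex \<Rightarrow> (nat \<Rightarrow> complex) \<Rightarrow> nat \<Rightarrow> nat \<Rightarrow> nat \<Rightarrow> (nat \<Rightarrow> nat) \<Rightarrow> (nat \<Rightarrow> nat) \<Rightarrow> complex" where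
  "Trow u w 0 \<alpha> \<gamma> \<delta> \<beta> = (if \<gamma> = \<alpha> then 1 else 0)"
| "Trow u w (Suc n) \<alpha> \<gamma> \<delta> \<beta> = (\<Sum>m\<in>{0::nat,1}. L u (w (Suc n)) \<gamma> (\<delta> (Suc n)) m (\<beta> (Suc n)) * Trow u w n \<alpha> m \<delta> \<beta>)"

lemma L_out: "\<gamma> \<notin> {0,1} \<Longrightarrow> L u w \<gamma> \<delta>' \<alpha> \<beta>' = 0"
  unfolding Lop_def by auto

definition "Pset (n::nat) (\<alpha>::nat) (\<gamma>::nat) = {s \<in> PiE {0..n} (\<lambda>_. {0::nat,1}). s 0 = \<alpha> \<and> s n = \<gamma>}"

lemma Pset_mem: "s \<in> Pset n \<alpha> \<gamma> \<Longrightarrow> i \<le> n \<Longrightarrow> s i \<in> {0,1}"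
  unfolding Pset_def using PiE_mem[of s "{0..n}" "\<lambda>_. {0::nat,1}" i] by auto

lemma Pset_ext: "s \<in> Pset n \<alpha> \<gamma> \<Longrightarrow> n < i \<Longrightarrow> s i = undefined"
  unfolding Pset_def by (auto simp: PiE_def extensional_def)

lemma Pset_empty: "\<gamma> \<notin> {0,1} \<Longrightarrow> Pset n \<alpha> \<gamma> = {}"
  using Pset_mem[of _ n \<alpha> \<gamma> n] unfolding Pset_def by auto

lemma Pset0: assumes "\<alpha> \<in> {0,1}" shows "Pset 0 \<alpha> \<gamma> = (if \<gamma> = \<alpha> then {(\<lambda>x::nat. undefined::nat)(0 := \<alpha>)} else {})"
proof (cases "\<gamma> = \<alpha>")
  case True
  have "Pset 0 \<alpha> \<gamma> = {(\<lambda>x::nat. undefined::nat)(0 := \<alpha>)}"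
  proof (intro equalityI subsetI)
    fix s assume s: "s \<in> Pset 0 \<alpha> \<gamma>"
    have "s = (\<lambda>x::nat. undefined::nat)(0 := \<alpha>)"
    proof
      fix x show "s x = ((\<lambda>x::nat. undefined::nat)(0 := \<alpha>)) x"
        using s Pset_ext[OF s, of x] unfolding Pset_def by (cases "x = 0") auto
    qed
    then show "s \<in> {(\<lambda>x::nat. undefined::nat)(0 := \<alpha>)}" by simp
  next
    fix s assume "s \<in> {(\<lambda>x::nat. undefined::nat)(0 := \<alpha>)}"
    then show "s \<in> Pset 0 \<alpha> \<gamma>" using True assms unfolding Pset_def by (auto simp: PiE_def extensional_def)
  qed
  then show ?thesis using True by simp
next
  case False
  then show ?thesis unfolding Pset_def by auto
qed

lemma Pset_Suc:
  assumes "\<gamma> \<in> {0,1}"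
  shows "Pset (Suc n) \<alpha> \<gamma> = (\<lambda>(m,s). s(Suc n := \<gamma>)) ` (SIGMA m:{0,1}. Pset n \<alpha> m)"
proof (intro equalityI subsetI)
  fix s assume s: "s \<in> Pset (Suc n) \<alpha> \<gamma>"
  let ?s = "restrict s {0..n}"
  have "?s \<in> Pset n \<alpha> (s n)" using s unfolding Pset_def by (auto simp: PiE_def Pi_def)
  moreover have "s n \<in> {0,1}" using s unfolding Pset_def by (auto simp: PiE_def Pi_def)
  moreover have "s = ?s(Suc n := \<gamma>)" using s unfolding Pset_def
    by (auto simp: PiE_def Pi_def extensional_def fun_eq_iff restrict_def)
  ultimately show "s \<in> (\<lambda>(m,s). s(Suc n := \<gamma>)) ` (SIGMA m:{0,1}. Pset n \<alpha> m)"
    by (intro image_eqI[of _ _ "(s n, ?s)"]) auto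
next
  fix s assume "s \<in> (\<lambda>(m,s). s(Suc n := \<gamma>)) ` (SIGMA m:{0,1}. Pset n \<alpha> m)"
  then obtain m s' where "m \<in> {0,1}" "s' \<in> Pset n \<alpha> m" "s = s'(Suc n := \<gamma>)" by auto
  then show "s \<in> Pset (Suc n) \<alpha> \<gamma>" using assms unfolding Pset_def
    by (auto simp: PiE_def Pi_def extensional_def)
qed

lemma Pset_inj: "inj_on (\<lambda>(m,s). s(Suc n := \<gamma>)) (SIGMA m:{0,1}. Pset n \<alpha> m)"
proof (rule inj_onI, clarsimp)
  fix m s m' s'
  assume h: "s \<in> Pset n \<alpha> m" "s' \<in> Pset n \<alpha> m'" "s(Suc n := \<gamma>) = s'(Suc n := \<gamma>)"
  have "s = s'"
  proof
    fix x show "s x = s' x"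
    proof (cases "x = Suc n")
      case True then show ?thesis using h(1,2) unfolding Pset_def by (auto simp: PiE_def extensional_def)
    next
      case False then show ?thesis using fun_cong[OF h(3), of x] by auto
    qed
  qed
  moreover then have "m = m'" using h unfolding Pset_def by auto
  ultimately show "m = m' \<and> s = s'" by auto
qed

lemma fin_Pset: "finite (Pset n \<alpha> \<gamma>)"
proof -
  have "finite (PiE {0..n} (\<lambda>_. {0::nat,1}))" by (simp add: finite_PiE)
  then show ?thesis unfolding Pset_def by simp
qed

lemma Trow_paths:
  assumes "\<alpha> \<in> {0,1}"
  shows "(\<Sum>s\<in>Pset n \<alpha> \<gamma>. \<Prod>j=1..n. L u (w j) (s j) (\<delta> j) (s (j-1)) (\<beta> j)) = Trow u w n \<alpha> \<gamma> \<delta> \<beta>"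
proof (induction n arbitrary: \<gamma>)
  case 0
  show ?case using assms by (simp add: Pset0)
next
  case (Suc n)
  show ?case
  proof (cases "\<gamma> \<in> {0,1}")
    case False
    then show ?thesis by (simp add: Pset_empty L_out)
  next
    case True
    have "(\<Sum>s\<in>Pset (Suc n) \<alpha> \<gamma>. \<Prod>j=1..Suc n. L u (w j) (s j) (\<delta> j) (s (j-1)) (\<beta> j))
      = (\<Sum>(m,s)\<in>(SIGMA m:{0,1}. Pset n \<alpha> m). \<Prod>j=1..Suc n. L u (w j) ((s(Suc n := \<gamma>)) j) (\<delta> j) ((s(Suc n := \<gamma>)) (j-1)) (\<beta> j))"
      unfolding Pset_Suc[OF True] by (subst sum.reindex[OF Pset_inj]) (simp add: case_prod_beta)
    also have "\<dots> = (\<Sum>m\<in>{0,1}. \<Sum>s\<in>Pset n \<alpha> m. L u (w (Suc n)) \<gamma> (\<delta> (Suc n)) m (\<beta> (Suc n)) *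
          (\<Prod>j=1..n. L u (w j) (s j) (\<delta> j) (s (j-1)) (\<beta> j)))"
    proof -
      have "(\<Sum>(m,s)\<in>(SIGMA m:{0,1}. Pset n \<alpha> m). \<Prod>j=1..Suc n. L u (w j) ((s(Suc n := \<gamma>)) j) (\<delta> j) ((s(Suc n := \<gamma>)) (j-1)) (\<beta> j))
        = (\<Sum>m\<in>{0,1}. \<Sum>s\<in>Pset n \<alpha> m. \<Prod>j=1..Suc n. L u (w j) ((s(Suc n := \<gamma>)) j) (\<delta> j) ((s(Suc n := \<gamma>)) (j-1)) (\<beta> j))"
        by (rule sum.Sigma[symmetric]) (auto simp: fin_Pset)
      also have "\<dots> = (\<Sum>m\<in>{0,1}. \<Sum>s\<in>Pset n \<alpha> m. L u (w (Suc n)) \<gamma> (\<delta> (Suc n)) m (\<beta> (Suc n)) *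
          (\<Prod>j=1..n. L u (w j) (s j) (\<delta> j) (s (j-1)) (\<beta> j)))"
      proof (intro sum.cong refl)
        fix m s assume ms: "m \<in> {0::nat,1}" "s \<in> Pset n \<alpha> m"
        have sn: "s n = m" using ms unfolding Pset_def by auto
        have "(\<Prod>j=1..Suc n. L u (w j) ((s(Suc n := \<gamma>)) j) (\<delta> j) ((s(Suc n := \<gamma>)) (j-1)) (\<beta> j))
            = L u (w (Suc n)) \<gamma> (\<delta> (Suc n)) (s n) (\<beta> (Suc n)) * (\<Prod>j=1..n. L u (w j) ((s(Suc n := \<gamma>)) j) (\<delta> j) ((s(Suc n := \<gamma>)) (j-1)) (\<beta> j))"
          by (simp add: prod.cl_ivl_Suc mult.commute)
        also have "(\<Prod>j=1..n. L u (w j) ((s(Suc n := \<gamma>)) j) (\<delta> j) ((s(Suc n := \<gamma>)) (j-1)) (\<beta> j))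
            = (\<Prod>j=1..n. L u (w j) (s j) (\<delta> j) (s (j-1)) (\<beta> j))"
          by (intro prod.cong refl) auto
        finally show "(\<Prod>j=1..Suc n. L u (w j) ((s(Suc n := \<gamma>)) j) (\<delta> j) ((s(Suc n := \<gamma>)) (j-1)) (\<beta> j)) =
           L u (w (Suc n)) \<gamma> (\<delta> (Suc n)) m (\<beta> (Suc n)) * (\<Prod>j = 1..n. L u (w j) (s j) (\<delta> j) (s (j - 1)) (\<beta> j))"
          using sn by simp
      qed
      finally show ?thesis .
    qed
    also have "\<dots> = Trow u w (Suc n) \<alpha> \<gamma> \<delta> \<beta>"
      by (simp only: Trow.simps sum_distrib_left[symmetric] Suc.IH)
    finally show ?thesis .
  qed
qed

lemma Cop_Trow: "Cop t a b c d e f N u w \<delta> \<beta> = Trow u w N 0 1 \<delta> \<beta>"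
  unfolding Cop_def aux_paths_def using Trow_paths[where \<alpha>=0 and n=N and \<gamma>=1 and u=u and w=w and \<delta>=\<delta> and \<beta>=\<beta>] by (simp add: Pset_def)

end

context sv begin

lemma Trow_cong:
  "(\<And>i. 1 \<le> i \<Longrightarrow> i \<le> n \<Longrightarrow> \<delta> i = \<delta>' i \<and> \<beta> i = \<beta>' i \<and> w i = w' i)
   \<Longrightarrow> Trow u w n \<alpha> \<gamma> \<delta> \<beta> = Trow u w' n \<alpha> \<gamma> \<delta>' \<beta>'"
proof (induction n arbitrary: \<gamma>)
  case 0 then show ?case by simp
next
  case (Suc n)
  have h: "\<delta> (Suc n) = \<delta>' (Suc n)" "\<beta> (Suc n) = \<beta>' (Suc n)" "w (Suc n) = w' (Suc n)"
    using Suc.prems[of "Suc n"] by auto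
  have "\<And>m. Trow u w n \<alpha> m \<delta> \<beta> = Trow u w' n \<alpha> m \<delta>' \<beta>'"
    using Suc by auto
  then show ?case using h by simp
qed

definition Rloc :: "complex \<Rightarrow> complex \<Rightarrow> nat \<Rightarrow> nat \<Rightarrow> nat \<Rightarrow> nat \<Rightarrow> complex" where
  "Rloc w1 w2 d1 d2 b1 b2 =
    (if (d1,d2,b1,b2) = (0,0,0,0) then a*b*c*d*(t*w2 - w1)
     else if (d1,d2,b1,b2) = (1,1,1,1) then a*b*c*d*(t*w2 - w1)
     else if (d1,d2,b1,b2) = (0,1,0,1) then a*b*c*d*(t-1)*w2
     else if (d1,d2,b1,b2) = (1,0,1,0) then a*b*c*d*(t-1)*w1
     else if (d1,d2,b1,b2) = (0,1,1,0) then t*(c*d)^2*(w1-w2)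
     else if (d1,d2,b1,b2) = (1,0,0,1) then (a*b)^2*(w1-w2)
     else 0)"

lemma af: "a*f = -(c*d)" using rel1 by (simp add: eq_neg_iff_add_eq_0 add.commute)
lemma be: "b*e = -(t*c*d)" using rel2 by (simp add: eq_neg_iff_add_eq_0 add.commute)
lemma fdef: "f = -(c*d)/a" using af anz by (simp add: field_simps)
lemma edef: "e = -(t*c*d)/b" using be bnz by (simp add: field_simps)

lemma local_ex:
  assumes "g \<in> {0,1}" "d1 \<in> {0,1}" "d2 \<in> {0,1}" "al \<in> {0,1}" "b1 \<in> {0,1}" "b2 \<in> {0,1}"
  shows "(\<Sum>x\<in>{0::nat,1}. \<Sum>y\<in>{0::nat,1}. Rloc w1 w2 d1 d2 x y * (\<Sum>m\<in>{0::nat,1}. L u w2 g y m b2 * L u w1 m x al b1))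
       = (\<Sum>x\<in>{0::nat,1}. \<Sum>y\<in>{0::nat,1}. (\<Sum>m\<in>{0::nat,1}. L u w1 g d2 m y * L u w2 m d1 al x) * Rloc w1 w2 x y b1 b2)"
  using assms anz bnz
  apply (simp only: insert_iff empty_iff simp_thms)
  apply (elim disjE)
  apply (simp_all add: Lop_def Rloc_def)
  apply (simp_all add: fdef edef field_simps)
  apply (simp_all add: algebra_simps power2_eq_square)
  done

lemma Trow_ex_base:
  assumes dv: "\<delta> (Suc i) \<in> {0,1}" "\<delta> (Suc (Suc i)) \<in> {0,1}" "\<beta> (Suc i) \<in> {0,1}" "\<beta> (Suc (Suc i)) \<in> {0,1}"
  shows "(\<Sum>x\<in>{0::nat,1}. \<Sum>y\<in>{0::nat,1}. Rloc (w (Suc i)) (w (Suc (Suc i))) (\<delta> (Suc i)) (\<delta> (Suc (Suc i))) x y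
            * Trow u w (Suc (Suc i)) \<alpha> \<gamma> (\<delta>(Suc i := x, Suc (Suc i) := y)) \<beta>)
       = (\<Sum>x\<in>{0::nat,1}. \<Sum>y\<in>{0::nat,1}. Trow u (w(Suc i := w (Suc (Suc i)), Suc (Suc i) := w (Suc i))) (Suc (Suc i)) \<alpha> \<gamma> \<delta> (\<beta>(Suc i := x, Suc (Suc i) := y))
            * Rloc (w (Suc i)) (w (Suc (Suc i))) x y (\<beta> (Suc i)) (\<beta> (Suc (Suc i))))"
proof (cases "\<gamma> \<in> {0,1}")
  case False
  then show ?thesis by (simp add: L_out)
next
  case True
  let ?w1 = "w (Suc i)" and ?w2 = "w (Suc (Suc i))"
  let ?d1 = "\<delta> (Suc i)" and ?d2 = "\<delta> (Suc (Suc i))" and ?b1 = "\<beta> (Suc i)" and ?b2 = "\<beta> (Suc (Suc i))"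
  let ?T = "\<lambda>m'. Trow u w i \<alpha> m' \<delta> \<beta>"
  have T1: "\<And>m' x y. Trow u w i \<alpha> m' (\<delta>(Suc i := x, Suc (Suc i) := y)) \<beta> = ?T m'"
    by (rule Trow_cong) auto
  have T2: "\<And>m' x y. Trow u (w(Suc i := w (Suc (Suc i)), Suc (Suc i) := w (Suc i))) i \<alpha> m' \<delta> (\<beta>(Suc i := x, Suc (Suc i) := y)) = ?T m'"
    by (rule Trow_cong) auto
  have "(\<Sum>x\<in>{0::nat,1}. \<Sum>y\<in>{0::nat,1}. Rloc ?w1 ?w2 ?d1 ?d2 x y
            * Trow u w (Suc (Suc i)) \<alpha> \<gamma> (\<delta>(Suc i := x, Suc (Suc i) := y)) \<beta>)
      = (\<Sum>m'\<in>{0::nat,1}. ?T m' * (\<Sum>x\<in>{0::nat,1}. \<Sum>y\<in>{0::nat,1}. Rloc ?w1 ?w2 ?d1 ?d2 x y * (\<Sum>m\<in>{0::nat,1}. L u ?w2 \<gamma> y m ?b2 * L u ?w1 m x m' ?b1)))"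
    by (simp add: T1 algebra_simps)
  also have "\<dots> = (\<Sum>m'\<in>{0::nat,1}. ?T m' * (\<Sum>x\<in>{0::nat,1}. \<Sum>y\<in>{0::nat,1}. (\<Sum>m\<in>{0::nat,1}. L u ?w1 \<gamma> ?d2 m y * L u ?w2 m ?d1 m' x) * Rloc ?w1 ?w2 x y ?b1 ?b2))"
  proof (rule sum.cong[OF refl])
    fix m' :: nat assume "m' \<in> {0,1}"
    then show "?T m' * (\<Sum>x\<in>{0::nat,1}. \<Sum>y\<in>{0::nat,1}. Rloc ?w1 ?w2 ?d1 ?d2 x y * (\<Sum>m\<in>{0::nat,1}. L u ?w2 \<gamma> y m ?b2 * L u ?w1 m x m' ?b1))
      = ?T m' * (\<Sum>x\<in>{0::nat,1}. \<Sum>y\<in>{0::nat,1}. (\<Sum>m\<in>{0::nat,1}. L u ?w1 \<gamma> ?d2 m y * L u ?w2 m ?d1 m' x) * Rloc ?w1 ?w2 x y ?b1 ?b2)"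
      using local_ex[OF True dv(1,2) _ dv(3,4), of m' ?w1 ?w2 u] by simp
  qed
  also have "\<dots> = (\<Sum>x\<in>{0::nat,1}. \<Sum>y\<in>{0::nat,1}. Trow u (w(Suc i := w (Suc (Suc i)), Suc (Suc i) := w (Suc i))) (Suc (Suc i)) \<alpha> \<gamma> \<delta> (\<beta>(Suc i := x, Suc (Suc i) := y))
            * Rloc ?w1 ?w2 x y ?b1 ?b2)"
    by (simp add: T2 algebra_simps)
  finally show ?thesis .
qed

end

context sv begin

abbreviation "sw w j \<equiv> w(j := w (Suc j), Suc j := w j)"

lemma Trow_ex:
  assumes j: "1 \<le> j" "Suc j \<le> n"
    and dv: "\<delta> j \<in> {0,1}" "\<delta> (Suc j) \<in> {0,1}" "\<beta> j \<in> {0,1}" "\<beta> (Suc j) \<in> {0,1}"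
  shows "(\<Sum>x\<in>{0::nat,1}. \<Sum>y\<in>{0::nat,1}. Rloc (w j) (w (Suc j)) (\<delta> j) (\<delta> (Suc j)) x y
            * Trow u w n \<alpha> \<gamma> (\<delta>(j := x, Suc j := y)) \<beta>)
       = (\<Sum>x\<in>{0::nat,1}. \<Sum>y\<in>{0::nat,1}. Trow u (sw w j) n \<alpha> \<gamma> \<delta> (\<beta>(j := x, Suc j := y))
            * Rloc (w j) (w (Suc j)) x y (\<beta> j) (\<beta> (Suc j)))"
proof -
  obtain i where ji: "j = Suc i" using j(1) by (cases j) auto
  obtain k where nk: "n = Suc j + k" using j(2) le_Suc_ex by blast
  have "\<forall>\<gamma>. (\<Sum>x\<in>{0::nat,1}. \<Sum>y\<in>{0::nat,1}. Rloc (w j) (w (Suc j)) (\<delta> j) (\<delta> (Suc j)) x y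
            * Trow u w (Suc j + k) \<alpha> \<gamma> (\<delta>(j := x, Suc j := y)) \<beta>)
       = (\<Sum>x\<in>{0::nat,1}. \<Sum>y\<in>{0::nat,1}. Trow u (sw w j) (Suc j + k) \<alpha> \<gamma> \<delta> (\<beta>(j := x, Suc j := y))
            * Rloc (w j) (w (Suc j)) x y (\<beta> j) (\<beta> (Suc j)))"
  proof (induction k)
    case 0
    show ?case unfolding ji add_0_right by (rule allI, rule Trow_ex_base[OF dv[unfolded ji]])
  next
    case (Suc k)
    show ?case
    proof
      fix \<gamma>
      let ?n = "Suc j + k"
      have ne: "Suc ?n \<noteq> j" "Suc ?n \<noteq> Suc j" by auto
      let ?R = "\<lambda>x y. Rloc (w j) (w (Suc j)) (\<delta> j) (\<delta> (Suc j)) x y"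
      let ?R' = "\<lambda>x y. Rloc (w j) (w (Suc j)) x y (\<beta> j) (\<beta> (Suc j))"
      let ?Lm = "\<lambda>m. L u (w (Suc ?n)) \<gamma> (\<delta> (Suc ?n)) m (\<beta> (Suc ?n))"
      have "(\<Sum>x\<in>{0::nat,1}. \<Sum>y\<in>{0::nat,1}. ?R x y * Trow u w (Suc ?n) \<alpha> \<gamma> (\<delta>(j := x, Suc j := y)) \<beta>)
          = (\<Sum>m\<in>{0::nat,1}. ?Lm m * (\<Sum>x\<in>{0::nat,1}. \<Sum>y\<in>{0::nat,1}. ?R x y * Trow u w ?n \<alpha> m (\<delta>(j := x, Suc j := y)) \<beta>))"
        using ne by (simp add: algebra_simps del: add_Suc_right add_Suc)
      also have "\<dots> = (\<Sum>m\<in>{0::nat,1}. ?Lm m * (\<Sum>x\<in>{0::nat,1}. \<Sum>y\<in>{0::nat,1}. Trow u (sw w j) ?n \<alpha> m \<delta> (\<beta>(j := x, Suc j := y)) * ?R' x y))"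
        by (simp only: Suc.IH)
      also have "\<dots> = (\<Sum>x\<in>{0::nat,1}. \<Sum>y\<in>{0::nat,1}. Trow u (sw w j) (Suc ?n) \<alpha> \<gamma> \<delta> (\<beta>(j := x, Suc j := y)) * ?R' x y)"
        using ne by (simp add: algebra_simps del: add_Suc_right add_Suc)
      finally show "(\<Sum>x\<in>{0::nat,1}. \<Sum>y\<in>{0::nat,1}. ?R x y * Trow u w (Suc j + Suc k) \<alpha> \<gamma> (\<delta>(j := x, Suc j := y)) \<beta>)
          = (\<Sum>x\<in>{0::nat,1}. \<Sum>y\<in>{0::nat,1}. Trow u (sw w j) (Suc j + Suc k) \<alpha> \<gamma> \<delta> (\<beta>(j := x, Suc j := y)) * ?R' x y)"
        by simp
    qed
  qed
  then show ?thesis using nk by simp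
qed


lemma conf_mem: "\<delta> \<in> configs N \<Longrightarrow> 1 \<le> i \<Longrightarrow> i \<le> N \<Longrightarrow> \<delta> i \<in> {0,1}"
  unfolding configs_def using PiE_mem[of \<delta> "{1..N}" "\<lambda>_. {0::nat,1}" i] by auto

lemma conf_out: "\<delta> \<in> configs N \<Longrightarrow> i \<notin> {1..N} \<Longrightarrow> \<delta> i = undefined"
  unfolding configs_def by (auto simp: PiE_def extensional_def)

lemma conf_upd: "\<delta> \<in> configs N \<Longrightarrow> 1 \<le> j \<Longrightarrow> j \<le> N \<Longrightarrow> x \<in> {0,1} \<Longrightarrow> \<delta>(j := x) \<in> configs N"
  unfolding configs_def by (auto simp: PiE_def extensional_def Pi_def)

lemma fin_configs: "finite (configs N)"
  unfolding configs_def by (simp add: finite_PiE)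

lemma conf_eqI: "\<delta> \<in> configs N \<Longrightarrow> \<gamma> \<in> configs N \<Longrightarrow> (\<And>i. 1 \<le> i \<Longrightarrow> i \<le> N \<Longrightarrow> \<delta> i = \<gamma> i) \<Longrightarrow> \<delta> = \<gamma>"
proof
  fix i assume "\<delta> \<in> configs N" "\<gamma> \<in> configs N" "\<And>i. 1 \<le> i \<Longrightarrow> i \<le> N \<Longrightarrow> \<delta> i = \<gamma> i"
  then show "\<delta> i = \<gamma> i" using conf_out[of \<delta> N i] conf_out[of \<gamma> N i] by (cases "i \<in> {1..N}") auto
qed

definition "agree j \<delta> \<gamma> = (\<forall>i. i \<noteq> j \<and> i \<noteq> Suc j \<longrightarrow> \<delta> i = (\<gamma> i :: nat))"

definition "Rop w j \<delta> \<gamma> = (if agree j \<delta> \<gamma> then Rloc (w j) (w (Suc j)) (\<delta> j) (\<delta> (Suc j)) (\<gamma> j) (\<gamma> (Suc j)) else 0)"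

lemma collapse:
  assumes \<delta>: "\<delta> \<in> configs N" and j: "1 \<le> j" "Suc j \<le> N"
  shows "(\<Sum>\<gamma>\<in>configs N. if agree j \<delta> \<gamma> then G \<gamma> else 0) = (\<Sum>x\<in>{0::nat,1}. \<Sum>y\<in>{0::nat,1}. G (\<delta>(j := x, Suc j := y)))"
proof -
  let ?f = "\<lambda>(x,y). \<delta>(j := x, Suc j := y)"
  let ?S = "?f ` ({0::nat,1} \<times> {0::nat,1})"
  have sub: "?S \<subseteq> configs N"
    using conf_upd[OF conf_upd[OF \<delta>], of j _ "Suc j"] j by auto
  have out: "\<gamma> \<in> configs N - ?S \<Longrightarrow> \<not> agree j \<delta> \<gamma>" for \<gamma>
  proof
    assume g: "\<gamma> \<in> configs N - ?S" and ag: "agree j \<delta> \<gamma>"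
    have "\<gamma> = \<delta>(j := \<gamma> j, Suc j := \<gamma> (Suc j))"
      using ag unfolding agree_def by (auto simp: fun_eq_iff)
    moreover have "\<gamma> j \<in> {0,1}" "\<gamma> (Suc j) \<in> {0,1}" using g conf_mem[of \<gamma> N] j by auto
    ultimately have "\<gamma> \<in> ?S" by (intro image_eqI[of _ _ "(\<gamma> j, \<gamma> (Suc j))"]) auto
    then show False using g by auto
  qed
  have inj: "inj_on ?f ({0::nat,1} \<times> {0::nat,1})"
  proof (rule inj_onI, clarify)
    fix x y x' y' assume h: "\<delta>(j := x, Suc j := y) = \<delta>(j := x', Suc j := y')"
    show "x = x' \<and> y = y'" using fun_cong[OF h, of j] fun_cong[OF h, of "Suc j"] by auto
  qed
  have "(\<Sum>\<gamma>\<in>configs N. if agree j \<delta> \<gamma> then G \<gamma> else 0) = (\<Sum>\<gamma>\<in>?S. if agree j \<delta> \<gamma> then G \<gamma> else 0)"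
    by (rule sum.mono_neutral_right[OF fin_configs sub]) (use out in auto)
  also have "\<dots> = (\<Sum>p\<in>{0::nat,1} \<times> {0::nat,1}. if agree j \<delta> (?f p) then G (?f p) else 0)"
    by (subst sum.reindex[OF inj]) simp
  also have "\<dots> = (\<Sum>p\<in>{0::nat,1} \<times> {0::nat,1}. G (?f p))"
    by (intro sum.cong refl) (auto simp: agree_def)
  also have "\<dots> = (\<Sum>x\<in>{0::nat,1}. \<Sum>y\<in>{0::nat,1}. G (\<delta>(j := x, Suc j := y)))"
    by (simp add: add_ac)
  finally show ?thesis .
qed

lemma Rop_left:
  assumes \<delta>: "\<delta> \<in> configs N" and j: "1 \<le> j" "Suc j \<le> N"
  shows "(\<Sum>\<gamma>\<in>configs N. Rop w j \<delta> \<gamma> * F \<gamma>) = (\<Sum>x\<in>{0::nat,1}. \<Sum>y\<in>{0::nat,1}. Rloc (w j) (w (Suc j)) (\<delta> j) (\<delta> (Suc j)) x y * F (\<delta>(j := x, Suc j := y)))"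
proof -
  have "(\<Sum>\<gamma>\<in>configs N. Rop w j \<delta> \<gamma> * F \<gamma>) = (\<Sum>\<gamma>\<in>configs N. if agree j \<delta> \<gamma> then Rloc (w j) (w (Suc j)) (\<delta> j) (\<delta> (Suc j)) (\<gamma> j) (\<gamma> (Suc j)) * F \<gamma> else 0)"
    unfolding Rop_def by (intro sum.cong refl) auto
  also have "\<dots> = (\<Sum>x\<in>{0::nat,1}. \<Sum>y\<in>{0::nat,1}. (\<lambda>\<gamma>. Rloc (w j) (w (Suc j)) (\<delta> j) (\<delta> (Suc j)) (\<gamma> j) (\<gamma> (Suc j)) * F \<gamma>) (\<delta>(j := x, Suc j := y)))"
    by (rule collapse[OF \<delta> j])
  finally show ?thesis by simp
qed

lemma agree_sym: "agree j \<delta> \<gamma> = agree j \<gamma> \<delta>" unfolding agree_def by auto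

lemma Rop_right:
  assumes \<beta>: "\<beta> \<in> configs N" and j: "1 \<le> j" "Suc j \<le> N"
  shows "(\<Sum>\<gamma>\<in>configs N. F \<gamma> * Rop w j \<gamma> \<beta>) = (\<Sum>x\<in>{0::nat,1}. \<Sum>y\<in>{0::nat,1}. F (\<beta>(j := x, Suc j := y)) * Rloc (w j) (w (Suc j)) x y (\<beta> j) (\<beta> (Suc j)))"
proof -
  have "(\<Sum>\<gamma>\<in>configs N. F \<gamma> * Rop w j \<gamma> \<beta>) = (\<Sum>\<gamma>\<in>configs N. if agree j \<beta> \<gamma> then F \<gamma> * Rloc (w j) (w (Suc j)) (\<gamma> j) (\<gamma> (Suc j)) (\<beta> j) (\<beta> (Suc j)) else 0)"
    unfolding Rop_def by (intro sum.cong refl) (auto simp: agree_sym)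
  also have "\<dots> = (\<Sum>x\<in>{0::nat,1}. \<Sum>y\<in>{0::nat,1}. (\<lambda>\<gamma>. F \<gamma> * Rloc (w j) (w (Suc j)) (\<gamma> j) (\<gamma> (Suc j)) (\<beta> j) (\<beta> (Suc j))) (\<beta>(j := x, Suc j := y)))"
    by (rule collapse[OF \<beta> j])
  finally show ?thesis by simp
qed

lemma row_ex:
  assumes \<delta>: "\<delta> \<in> configs N" and \<beta>: "\<beta> \<in> configs N" and j: "1 \<le> j" "Suc j \<le> N"
  shows "(\<Sum>\<gamma>\<in>configs N. Rop w j \<delta> \<gamma> * Cop t a b c d e f N u w \<gamma> \<beta>)
       = (\<Sum>\<gamma>\<in>configs N. Cop t a b c d e f N u (sw w j) \<delta> \<gamma> * Rop w j \<gamma> \<beta>)"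
proof -
  have dv: "\<delta> j \<in> {0,1}" "\<delta> (Suc j) \<in> {0,1}" "\<beta> j \<in> {0,1}" "\<beta> (Suc j) \<in> {0,1}"
    using conf_mem[OF \<delta>] conf_mem[OF \<beta>] j by auto
  show ?thesis unfolding Rop_left[OF \<delta> j] Rop_right[OF \<beta> j] Cop_Trow
    by (rule Trow_ex[OF j dv])
qed

abbreviation "oneC N \<equiv> restrict (\<lambda>_. 1::nat) {1..N}"
abbreviation "zeroC N \<equiv> restrict (\<lambda>_. 0::nat) {1..N}"

lemma oneC_conf: "oneC N \<in> configs N" unfolding configs_def by auto
lemma zeroC_conf: "zeroC N \<in> configs N" unfolding configs_def by auto

end

context sv begin

lemma Rloc00_sum: "(\<Sum>x\<in>{0::nat,1}. \<Sum>y\<in>{0::nat,1}. Rloc w1 w2 0 0 x y * F x y) = Rloc w1 w2 0 0 0 0 * F 0 0"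
  by (simp add: Rloc_def)

lemma Rloc_11_sum: "d1 \<in> {0,1} \<Longrightarrow> d2 \<in> {0,1} \<Longrightarrow>
  (\<Sum>x\<in>{0::nat,1}. \<Sum>y\<in>{0::nat,1}. Rloc w1 w2 d1 d2 x y * F x y) = 
   (if d1 = 1 \<and> d2 = 1 then Rloc w1 w2 1 1 1 1 * F 1 1 + Rloc w1 w2 1 1 0 0 * F 0 0 + Rloc w1 w2 1 1 0 1 * F 0 1 + Rloc w1 w2 1 1 1 0 * F 1 0
    else Rloc w1 w2 d1 d2 0 0 * F 0 0 + Rloc w1 w2 d1 d2 0 1 * F 0 1 + Rloc w1 w2 d1 d2 1 0 * F 1 0 + Rloc w1 w2 d1 d2 1 1 * F 1 1)"
  by (auto simp: algebra_simps)

lemma Zvec_ex: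
  assumes j: "1 \<le> j" "Suc j \<le> N"
  shows "\<delta> \<in> configs N \<Longrightarrow> (\<Sum>\<gamma>\<in>configs N. Rop w j \<delta> \<gamma> * Zvec t a b c d e f N u w k \<gamma>)
       = a*b*c*d*(t * w (Suc j) - w j) * Zvec t a b c d e f N u (sw w j) k \<delta>"
proof (induction k arbitrary: \<delta>)
  case 0
  have jN: "j \<in> {1..N}" "Suc j \<in> {1..N}" using j by auto
  have oj: "oneC N j = 1" "oneC N (Suc j) = 1" using jN by auto
  have E1: "\<delta>(j := x, Suc j := y) = oneC N \<longleftrightarrow> x = 1 \<and> y = 1 \<and> (\<forall>i. i \<noteq> j \<and> i \<noteq> Suc j \<longrightarrow> \<delta> i = oneC N i)" for x y
  proof
    assume h: "\<delta>(j := x, Suc j := y) = oneC N"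
    have "x = 1" using fun_cong[OF h, of j] oj by simp
    moreover have "y = 1" using fun_cong[OF h, of "Suc j"] oj by simp
    moreover have "\<forall>i. i \<noteq> j \<and> i \<noteq> Suc j \<longrightarrow> \<delta> i = oneC N i"
    proof (intro allI impI)
      fix i assume "i \<noteq> j \<and> i \<noteq> Suc j"
      then show "\<delta> i = oneC N i" using fun_cong[OF h, of i] by simp
    qed
    ultimately show "x = 1 \<and> y = 1 \<and> (\<forall>i. i \<noteq> j \<and> i \<noteq> Suc j \<longrightarrow> \<delta> i = oneC N i)" by blast
  next
    assume h: "x = 1 \<and> y = 1 \<and> (\<forall>i. i \<noteq> j \<and> i \<noteq> Suc j \<longrightarrow> \<delta> i = oneC N i)"
    show "\<delta>(j := x, Suc j := y) = oneC N"
    proof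
      fix i show "(\<delta>(j := x, Suc j := y)) i = oneC N i"
        using h oj by (cases "i = j"; cases "i = Suc j") simp_all
    qed
  qed
  have E2: "\<delta> = oneC N \<longleftrightarrow> \<delta> j = 1 \<and> \<delta> (Suc j) = 1 \<and> (\<forall>i. i \<noteq> j \<and> i \<noteq> Suc j \<longrightarrow> \<delta> i = oneC N i)"
  proof
    assume "\<delta> = oneC N" then show "\<delta> j = 1 \<and> \<delta> (Suc j) = 1 \<and> (\<forall>i. i \<noteq> j \<and> i \<noteq> Suc j \<longrightarrow> \<delta> i = oneC N i)"
      using oj by simp
  next
    assume h: "\<delta> j = 1 \<and> \<delta> (Suc j) = 1 \<and> (\<forall>i. i \<noteq> j \<and> i \<noteq> Suc j \<longrightarrow> \<delta> i = oneC N i)"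
    show "\<delta> = oneC N"
    proof
      fix i show "\<delta> i = oneC N i"
        using h oj by (cases "i = j"; cases "i = Suc j") simp_all
    qed
  qed
  have d: "\<delta> j \<in> {0,1}" "\<delta> (Suc j) \<in> {0,1}" using conf_mem[OF "0.prems"] j by auto
  have "(\<Sum>\<gamma>\<in>configs N. Rop w j \<delta> \<gamma> * Zvec t a b c d e f N u w 0 \<gamma>)
     = (\<Sum>x\<in>{0::nat,1}. \<Sum>y\<in>{0::nat,1}. Rloc (w j) (w (Suc j)) (\<delta> j) (\<delta> (Suc j)) x y * (if \<delta>(j := x, Suc j := y) = oneC N then 1 else 0))"
    unfolding Rop_left[OF "0.prems" j] by simp
  also have "\<dots> = a*b*c*d*(t * w (Suc j) - w j) * Zvec t a b c d e f N u (sw w j) 0 \<delta>"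
    unfolding Rloc_11_sum[OF d] E1 E2 Zvec.simps using d by (auto simp: Rloc_def)
  finally show ?case .
next
  case (Suc k)
  let ?C = "Cop t a b c d e f N (u (Suc k)) w" and ?C' = "Cop t a b c d e f N (u (Suc k)) (sw w j)"
  let ?Z = "Zvec t a b c d e f N u w k" and ?Z' = "Zvec t a b c d e f N u (sw w j) k"
  let ?\<rho> = "a*b*c*d*(t * w (Suc j) - w j)"
  let ?R = "Rop w j"
  have "(\<Sum>\<gamma>\<in>configs N. ?R \<delta> \<gamma> * Zvec t a b c d e f N u w (Suc k) \<gamma>)
      = (\<Sum>\<gamma>\<in>configs N. \<Sum>\<beta>\<in>configs N. ?R \<delta> \<gamma> * ?C \<gamma> \<beta> * ?Z \<beta>)"
    by (simp add: sum_distrib_left mult.assoc)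
  also have "\<dots> = (\<Sum>\<beta>\<in>configs N. \<Sum>\<gamma>\<in>configs N. ?R \<delta> \<gamma> * ?C \<gamma> \<beta> * ?Z \<beta>)"
    by (rule sum.swap)
  also have "\<dots> = (\<Sum>\<beta>\<in>configs N. (\<Sum>\<gamma>\<in>configs N. ?R \<delta> \<gamma> * ?C \<gamma> \<beta>) * ?Z \<beta>)"
    by (simp add: sum_distrib_right)
  also have "\<dots> = (\<Sum>\<beta>\<in>configs N. (\<Sum>\<gamma>\<in>configs N. ?C' \<delta> \<gamma> * ?R \<gamma> \<beta>) * ?Z \<beta>)"
    by (intro sum.cong refl) (simp add: row_ex[OF Suc.prems _ j])
  also have "\<dots> = (\<Sum>\<beta>\<in>configs N. \<Sum>\<gamma>\<in>configs N. ?C' \<delta> \<gamma> * (?R \<gamma> \<beta> * ?Z \<beta>))"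
    by (simp add: sum_distrib_right mult.assoc)
  also have "\<dots> = (\<Sum>\<gamma>\<in>configs N. \<Sum>\<beta>\<in>configs N. ?C' \<delta> \<gamma> * (?R \<gamma> \<beta> * ?Z \<beta>))"
    by (rule sum.swap)
  also have "\<dots> = (\<Sum>\<gamma>\<in>configs N. ?C' \<delta> \<gamma> * (\<Sum>\<beta>\<in>configs N. ?R \<gamma> \<beta> * ?Z \<beta>))"
    by (simp add: sum_distrib_left)
  also have "\<dots> = (\<Sum>\<gamma>\<in>configs N. ?C' \<delta> \<gamma> * (?\<rho> * ?Z' \<gamma>))"
    by (rule sum.cong[OF refl]) (simp only: Suc.IH)
  also have "\<dots> = ?\<rho> * Zvec t a b c d e f N u (sw w j) (Suc k) \<delta>"
    by (simp add: sum_distrib_left algebra_simps)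
  finally show ?case .
qed

lemma Zbar_sym_nz:
  assumes j: "1 \<le> j" "Suc j \<le> N" and nz: "t * w (Suc j) \<noteq> w j"
  shows "Zbar t a b c d e f N u w = Zbar t a b c d e f N u (sw w j)"
proof -
  have jN: "j \<in> {1..N}" "Suc j \<in> {1..N}" using j by auto
  have z: "(zeroC N)(j := 0, Suc j := 0) = zeroC N"
  proof
    fix i show "((zeroC N)(j := 0, Suc j := 0)) i = zeroC N i"
      using jN by (cases "i = j"; cases "i = Suc j") simp_all
  qed
  have zj: "zeroC N j = 0" "zeroC N (Suc j) = 0" using jN by auto
  have "a*b*c*d*(t * w (Suc j) - w j) * Zvec t a b c d e f N u (sw w j) N (zeroC N)
     = (\<Sum>\<gamma>\<in>configs N. Rop w j (zeroC N) \<gamma> * Zvec t a b c d e f N u w N \<gamma>)"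
    using Zvec_ex[OF j zeroC_conf, of w u N] by simp
  also have "\<dots> = Rloc (w j) (w (Suc j)) 0 0 0 0 * Zvec t a b c d e f N u w N ((zeroC N)(j := 0, Suc j := 0))"
    unfolding Rop_left[OF zeroC_conf j] zj by (rule Rloc00_sum)
  also have "\<dots> = a*b*c*d*(t * w (Suc j) - w j) * Zvec t a b c d e f N u w N (zeroC N)"
    unfolding z by (simp add: Rloc_def)
  finally have eq: "a*b*c*d*(t * w (Suc j) - w j) * Zvec t a b c d e f N u (sw w j) N (zeroC N)
      = a*b*c*d*(t * w (Suc j) - w j) * Zvec t a b c d e f N u w N (zeroC N)" .
  have "a*b*c*d*(t * w (Suc j) - w j) \<noteq> 0" using nz anz bnz cnz dnz by auto
  from mult_left_cancel[OF this, THEN iffD1, OF eq] show ?thesis unfolding Zbar_def by (rule sym)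
qed

end

declare One_nat_def [simp del]

lemma pf_lin: "pf (\<lambda>y. p * y + q) 1"
  unfolding pf_def by (rule exI[of _ "[:q, p:]"]) (auto simp: algebra_simps)

context sv begin

definition "cu g dl al be =
     (if (g,dl,al,be) = (0::nat,0::nat,0::nat,0::nat) then a
      else if (g,dl,al,be) = (0,1,0,1) then a*t
      else if (g,dl,al,be) = (0,1,1,0) then (1-t)*c
      else if (g,dl,al,be) = (1,0,0,1) then 0
      else if (g,dl,al,be) = (1,0,1,0) then e
      else if (g,dl,al,be) = (1,1,1,1) then e
      else 0)"
definition "c0 w g dl al be =
     (if (g,dl,al,be) = (0::nat,0::nat,0::nat,0::nat) then b*w
      else if (g,dl,al,be) = (0,1,0,1) then b*w
      else if (g,dl,al,be) = (0,1,1,0) then 0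
      else if (g,dl,al,be) = (1,0,0,1) then (1-t)*d*w
      else if (g,dl,al,be) = (1,0,1,0) then f*w
      else if (g,dl,al,be) = (1,1,1,1) then t*f*w
      else 0)"
definition "cw g dl al be =
     (if (g,dl,al,be) = (0::nat,0::nat,0::nat,0::nat) then b
      else if (g,dl,al,be) = (0,1,0,1) then b
      else if (g,dl,al,be) = (0,1,1,0) then 0
      else if (g,dl,al,be) = (1,0,0,1) then (1-t)*d
      else if (g,dl,al,be) = (1,0,1,0) then f
      else if (g,dl,al,be) = (1,1,1,1) then t*f
      else 0)"

lemma L_u: "L y w g dl al be = cu g dl al be * y + c0 w g dl al be"
  by (simp add: Lop_def cu_def c0_def algebra_simps)

lemma L_w: "L u y g dl al be = cw g dl al be * y + c0 u g dl al be * 0 + (cu g dl al be * u)"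
  by (simp add: Lop_def cu_def c0_def cw_def algebra_simps)

lemma L_pf_u: "pf (\<lambda>y. L y w g dl al be) 1"
  unfolding L_u by (rule pf_lin)

lemma L_pf_w: "pf (\<lambda>y. L u y g dl al be) 1"
  unfolding L_w using pf_lin[of "cw g dl al be" "cu g dl al be * u"] by simp

lemma L_top: "L y w 1 0 0 be = c0 w 1 0 0 be"
  by (simp add: L_u cu_def)


lemma Trow_pf_u: "pf (\<lambda>y. Trow y w n \<alpha> \<gamma> \<delta> \<beta>) n"
proof (induction n arbitrary: \<gamma>)
  case 0 then show ?case by (simp add: pf_const)
next
  case (Suc n)
  have "pf (\<lambda>y. \<Sum>m\<in>{0::nat,1}. L y (w (Suc n)) \<gamma> (\<delta> (Suc n)) m (\<beta> (Suc n)) * Trow y w n \<alpha> m \<delta> \<beta>) (Suc n)"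
    by (rule pf_sum) (auto intro!: pf_mult'[OF L_pf_u Suc.IH])
  then show ?case by simp
qed

lemma Trow_pf_w: "pf (\<lambda>y. Trow u (w(i := y)) n \<alpha> \<gamma> \<delta> \<beta>) n"
proof (induction n arbitrary: \<gamma>)
  case 0 then show ?case by (simp add: pf_const)
next
  case (Suc n)
  have "pf (\<lambda>y. \<Sum>m\<in>{0::nat,1}. L u ((w(i := y)) (Suc n)) \<gamma> (\<delta> (Suc n)) m (\<beta> (Suc n)) * Trow u (w(i := y)) n \<alpha> m \<delta> \<beta>) (Suc n)"
  proof (rule pf_sum)
    fix m :: nat
    have "pf (\<lambda>y. L u ((w(i := y)) (Suc n)) \<gamma> (\<delta> (Suc n)) m (\<beta> (Suc n))) 1"
    proof (cases "i = Suc n")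
      case True then show ?thesis by (simp add: L_pf_w)
    next
      case False then show ?thesis by (simp add: pf_const)
    qed
    then show "pf (\<lambda>y. L u ((w(i := y)) (Suc n)) \<gamma> (\<delta> (Suc n)) m (\<beta> (Suc n)) * Trow u (w(i := y)) n \<alpha> m \<delta> \<beta>) (Suc n)"
      by (rule pf_mult'[OF _ Suc.IH]) simp
  qed simp
  then show ?case by (simp only: Trow.simps)
qed

lemma Trow_top:
  "(\<And>i. 1 \<le> i \<Longrightarrow> i \<le> n \<Longrightarrow> \<delta> i = 0) \<Longrightarrow>
    pf (\<lambda>y. Trow y w n 0 1 \<delta> \<beta>) (n - 1) \<and> pf (\<lambda>y. Trow y w n 0 0 \<delta> \<beta>) n"
proof (induction n)
  case 0 then show ?case by (simp add: pf_const)
next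
  case (Suc n)
  have IH: "pf (\<lambda>y. Trow y w n 0 1 \<delta> \<beta>) (n - 1)" "pf (\<lambda>y. Trow y w n 0 0 \<delta> \<beta>) n"
    using Suc by auto
  have ds: "\<delta> (Suc n) = 0" using Suc.prems by auto
  have A: "pf (\<lambda>y. Trow y w (Suc n) 0 1 \<delta> \<beta>) n"
  proof -
    have "pf (\<lambda>y. c0 (w (Suc n)) 1 0 0 (\<beta> (Suc n)) * Trow y w n 0 0 \<delta> \<beta> + L y (w (Suc n)) 1 0 1 (\<beta> (Suc n)) * Trow y w n 0 1 \<delta> \<beta>) n"
    proof (rule pf_add)
      show "pf (\<lambda>y. c0 (w (Suc n)) 1 0 0 (\<beta> (Suc n)) * Trow y w n 0 0 \<delta> \<beta>) n"
        by (rule pf_mult'[OF pf_const IH(2)]) simp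
      show "pf (\<lambda>y. L y (w (Suc n)) 1 0 1 (\<beta> (Suc n)) * Trow y w n 0 1 \<delta> \<beta>) n"
      proof (cases n)
        case 0 then show ?thesis by (simp add: pf_const)
      next
        case (Suc m) then show ?thesis by (intro pf_mult'[OF L_pf_u IH(1)]) simp
      qed
    qed
    moreover have "Trow y w (Suc n) 0 1 \<delta> \<beta> = c0 (w (Suc n)) 1 0 0 (\<beta> (Suc n)) * Trow y w n 0 0 \<delta> \<beta> + L y (w (Suc n)) 1 0 1 (\<beta> (Suc n)) * Trow y w n 0 1 \<delta> \<beta>" for y
      using ds by (simp add: L_top)
    ultimately show ?thesis by simp
  qed
  have B: "pf (\<lambda>y. Trow y w (Suc n) 0 0 \<delta> \<beta>) (Suc n)" by (rule Trow_pf_u)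
  show ?case using A B by simp
qed

lemma Zvec_u_cong: "(\<And>i. 1 \<le> i \<Longrightarrow> i \<le> k \<Longrightarrow> u i = u' i) \<Longrightarrow> Zvec t a b c d e f N u w k \<delta> = Zvec t a b c d e f N u' w k \<delta>"
proof (induction k arbitrary: \<delta>)
  case 0 then show ?case by simp
next
  case (Suc k)
  have "u (Suc k) = u' (Suc k)" using Suc.prems by auto
  moreover have "\<And>\<beta>. Zvec t a b c d e f N u w k \<beta> = Zvec t a b c d e f N u' w k \<beta>" using Suc by auto
  ultimately show ?case by simp
qed

lemma Zvec_pf_u: "pf (\<lambda>y. Zvec t a b c d e f N (u(i := y)) w k \<delta>) (k * N)"
proof (induction k arbitrary: \<delta>)
  case 0 then show ?case by (simp add: pf_const)
next
  case (Suc k)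
  have "pf (\<lambda>y. \<Sum>\<beta>\<in>configs N. Cop t a b c d e f N ((u(i := y)) (Suc k)) w \<delta> \<beta> * Zvec t a b c d e f N (u(i := y)) w k \<beta>) (Suc k * N)"
  proof (rule pf_sum[OF fin_configs])
    fix \<beta>
    have "pf (\<lambda>y. Cop t a b c d e f N ((u(i := y)) (Suc k)) w \<delta> \<beta>) N"
    proof (cases "i = Suc k")
      case True then show ?thesis by (simp add: Cop_Trow Trow_pf_u)
    next
      case False then show ?thesis by (simp add: pf_const)
    qed
    then show "pf (\<lambda>y. Cop t a b c d e f N ((u(i := y)) (Suc k)) w \<delta> \<beta> * Zvec t a b c d e f N (u(i := y)) w k \<beta>) (Suc k * N)"
      by (rule pf_mult'[OF _ Suc.IH]) simp
  qed
  then show ?case by (simp only: Zvec.simps)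
qed

lemma Zvec_pf_w: "pf (\<lambda>y. Zvec t a b c d e f N u (w(i := y)) k \<delta>) (k * N)"
proof (induction k arbitrary: \<delta>)
  case 0 then show ?case by (simp add: pf_const)
next
  case (Suc k)
  have "pf (\<lambda>y. \<Sum>\<beta>\<in>configs N. Cop t a b c d e f N (u (Suc k)) (w(i := y)) \<delta> \<beta> * Zvec t a b c d e f N u (w(i := y)) k \<beta>) (Suc k * N)"
  proof (rule pf_sum[OF fin_configs])
    fix \<beta>
    have "pf (\<lambda>y. Cop t a b c d e f N (u (Suc k)) (w(i := y)) \<delta> \<beta>) N" by (simp add: Cop_Trow Trow_pf_w)
    then show "pf (\<lambda>y. Cop t a b c d e f N (u (Suc k)) (w(i := y)) \<delta> \<beta> * Zvec t a b c d e f N u (w(i := y)) k \<beta>) (Suc k * N)"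
      by (rule pf_mult'[OF _ Suc.IH]) simp
  qed
  then show ?case by (simp only: Zvec.simps)
qed

lemma Zbar_pf_uN:
  assumes "1 \<le> N"
  shows "pf (\<lambda>y. Zbar t a b c d e f N (u(N := y)) w) (N - 1)"
proof -
  obtain M where M: "N = Suc M" using assms by (cases N) auto
  have z: "\<And>i. 1 \<le> i \<Longrightarrow> i \<le> N \<Longrightarrow> zeroC N i = 0" by auto
  have "pf (\<lambda>y. \<Sum>\<beta>\<in>configs N. Cop t a b c d e f N y w (zeroC N) \<beta> * Zvec t a b c d e f N u w M \<beta>) (N - 1)"
  proof (rule pf_sum[OF fin_configs])
    fix \<beta>
    have "pf (\<lambda>y. Trow y w N 0 1 (zeroC N) \<beta>) (N - 1)" using Trow_top[where n=N and \<delta>="zeroC N" and w=w and \<beta>=\<beta>] by simp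
    then have h: "pf (\<lambda>y. Cop t a b c d e f N y w (zeroC N) \<beta>) (N - 1)" by (simp add: Cop_Trow)
    from pf_mult'[OF h pf_const[where n=0 and k="Zvec t a b c d e f N u w M \<beta>"]]
    show "pf (\<lambda>y. Cop t a b c d e f N y w (zeroC N) \<beta> * Zvec t a b c d e f N u w M \<beta>) (N - 1)"
      by simp
  qed
  moreover have "\<And>y \<beta>. Zvec t a b c d e f N (u(N := y)) w M \<beta> = Zvec t a b c d e f N u w M \<beta>"
    by (rule Zvec_u_cong) (auto simp: M)
  ultimately show ?thesis unfolding Zbar_def M by simp
qed

lemma Zbar_sym:
  assumes j: "1 \<le> j" "Suc j \<le> N"
  shows "Zbar t a b c d e f N u w = Zbar t a b c d e f N u (sw w j)"
proof -
  let ?F = "\<lambda>y. Zbar t a b c d e f N u (w(j := y)) - Zbar t a b c d e f N u ((w(j := w (Suc j)))(Suc j := y))"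
  have e1: "sw (w(j := y)) j = (w(j := w (Suc j)))(Suc j := y)" for y by (auto simp: fun_eq_iff)
  have pf: "pf ?F (N * N)"
    unfolding Zbar_def by (intro pf_diff Zvec_pf_w)
  have fin: "finite {t * w (Suc j)}" by simp
  have "?F y = 0" if "y \<notin> {t * w (Suc j)}" for y
    using Zbar_sym_nz[OF j, of "w(j := y)" u] that e1[of y] by auto
  from pf_cofinite[OF pf fin this] have "?F (w j) = 0" .
  moreover have "(w(j := w (Suc j)))(Suc j := w j) = sw w j" by simp
  ultimately show ?thesis by simp
qed

end

context sv begin

lemma Trow_00:
  "(\<And>i. 1 \<le> i \<Longrightarrow> i \<le> m \<Longrightarrow> \<delta> i = 0) \<Longrightarrow>
    Trow y w m 0 0 \<delta> \<beta> = (\<Prod>i=1..m. if \<beta> i = 0 then a*y + b*w i else 0)"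
proof (induction m)
  case 0 then show ?case by simp
next
  case (Suc m)
  have ds: "\<delta> (Suc m) = 0" using Suc.prems by auto
  have IH: "Trow y w m 0 0 \<delta> \<beta> = (\<Prod>i=1..m. if \<beta> i = 0 then a*y + b*w i else 0)" using Suc by auto
  have "Trow y w (Suc m) 0 0 \<delta> \<beta> = L y (w (Suc m)) 0 0 0 (\<beta> (Suc m)) * Trow y w m 0 0 \<delta> \<beta>"
    using ds by (simp add: Lop_def)
  also have "L y (w (Suc m)) 0 0 0 (\<beta> (Suc m)) = (if \<beta> (Suc m) = 0 then a*y + b*w (Suc m) else 0)"
    by (simp add: Lop_def)
  finally show ?case unfolding IH by (simp add: prod.cl_ivl_Suc mult.commute)
qed

lemma Trow_01_spec:
  assumes "\<And>i. 1 \<le> i \<Longrightarrow> i \<le> Suc m \<Longrightarrow> \<delta> i = 0" and ey: "e*y + f*w (Suc m) = 0"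
  shows "Trow y w (Suc m) 0 1 \<delta> \<beta> = (if \<beta> (Suc m) = 1 then (1-t)*d*w (Suc m) else 0) * Trow y w m 0 0 \<delta> \<beta>"
proof -
  have ds: "\<delta> (Suc m) = 0" using assms by auto
  show ?thesis using ds ey by (simp add: Lop_def)
qed

definition "eN N = (zeroC N)(N := 1)"

lemma eN_conf: "1 \<le> N \<Longrightarrow> eN N \<in> configs N"
  unfolding eN_def by (rule conf_upd[OF zeroC_conf]) auto

lemma Cop_top_spec:
  assumes N: "N = Suc M" and ey: "e*y + f*w N = 0" and \<beta>: "\<beta> \<in> configs N"
  shows "Cop t a b c d e f N y w (zeroC N) \<beta> = (if \<beta> = eN N then (1-t)*d*w N * (\<Prod>i=1..M. a*y + b*w i) else 0)"
proof -
  have z: "\<And>i. 1 \<le> i \<Longrightarrow> i \<le> Suc M \<Longrightarrow> zeroC N i = 0" "\<And>i. 1 \<le> i \<Longrightarrow> i \<le> M \<Longrightarrow> zeroC N i = 0"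
    using N by auto
  have C: "Cop t a b c d e f N y w (zeroC N) \<beta> = (if \<beta> N = 1 then (1-t)*d*w N else 0) * (\<Prod>i=1..M. if \<beta> i = 0 then a*y + b*w i else 0)"
  proof -
    have ey': "e*y + f*w (Suc M) = 0" using ey N by simp
    have "Trow y w (Suc M) 0 1 (zeroC N) \<beta> = (if \<beta> (Suc M) = 1 then (1-t)*d*w (Suc M) else 0) * Trow y w M 0 0 (zeroC N) \<beta>"
      by (rule Trow_01_spec[where m=M and \<delta>="zeroC N" and y=y and w=w and \<beta>=\<beta>, OF z(1) ey'])
    moreover have "Trow y w M 0 0 (zeroC N) \<beta> = (\<Prod>i=1..M. if \<beta> i = 0 then a*y + b*w i else 0)"
      by (rule Trow_00[where m=M and \<delta>="zeroC N" and y=y and w=w and \<beta>=\<beta>, OF z(2)])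
    ultimately show ?thesis unfolding Cop_Trow using N by simp
  qed
  show ?thesis
  proof (cases "\<beta> = eN N")
    case True
    then show ?thesis unfolding C using N by (simp add: eN_def)
  next
    case False
    then obtain i where i: "1 \<le> i" "i \<le> N" "\<beta> i \<noteq> eN N i"
      using conf_eqI[OF \<beta> eN_conf] N by fastforce
    show ?thesis
    proof (cases "i = N")
      case True
      then have "\<beta> N \<noteq> 1" using i by (simp add: eN_def)
      then show ?thesis unfolding C using False by simp
    next
      case ne: False
      then have "\<beta> i \<noteq> 0" "i \<le> M" using i N by (auto simp: eN_def)
      then have "(\<Prod>i=1..M. if \<beta> i = 0 then a*y + b*w i else 0) = 0"
        using i by (intro prod_zero) (auto intro!: bexI[where x=i])
      then show ?thesis unfolding C using False by simp
    qed
  qed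
qed

lemma Zbar_top:
  assumes N: "N = Suc M" and ey: "e*x + f*w N = 0"
  shows "Zbar t a b c d e f N (u(N := x)) w = (1-t)*d*w N * (\<Prod>i=1..M. a*x + b*w i) * Zvec t a b c d e f N u w M (eN N)"
proof -
  have uc: "\<And>\<beta>. Zvec t a b c d e f N (u(N := x)) w M \<beta> = Zvec t a b c d e f N u w M \<beta>"
    by (rule Zvec_u_cong) (auto simp: N)
  have "Zbar t a b c d e f N (u(N := x)) w = (\<Sum>\<beta>\<in>configs N. Cop t a b c d e f N x w (zeroC N) \<beta> * Zvec t a b c d e f N u w M \<beta>)"
    unfolding Zbar_def N by (simp add: uc[unfolded N])
  also have "\<dots> = (\<Sum>\<beta>\<in>configs N. if \<beta> = eN N then (1-t)*d*w N * (\<Prod>i=1..M. a*x + b*w i) * Zvec t a b c d e f N u w M \<beta> else 0)"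
    by (intro sum.cong refl) (simp add: Cop_top_spec[where y=x and w=w and N=N and M=M, OF N ey])
  also have "\<dots> = (1-t)*d*w N * (\<Prod>i=1..M. a*x + b*w i) * Zvec t a b c d e f N u w M (eN N)"
    using eN_conf[of N] N by (simp add: fin_configs)
  finally show ?thesis .
qed

lemma sum_configs_last:
  assumes N: "N = Suc M"
  shows "(\<Sum>\<beta>\<in>configs N. if \<beta> N = 1 then g (restrict \<beta> {1..M}) else 0) = (\<Sum>\<beta>'\<in>configs M. g \<beta>')"
proof -
  let ?h = "\<lambda>\<beta>'. \<beta>'(N := 1::nat)"
  have img: "{\<beta>\<in>configs N. \<beta> N = 1} = ?h ` configs M"
  proof (intro equalityI subsetI)
    fix \<beta> assume b: "\<beta> \<in> {\<beta>\<in>configs N. \<beta> N = 1}"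
    have "restrict \<beta> {1..M} \<in> configs M" using b unfolding configs_def N by (auto simp: PiE_def Pi_def)
    moreover have "\<beta> = ?h (restrict \<beta> {1..M})"
    proof
      fix i show "\<beta> i = ?h (restrict \<beta> {1..M}) i"
        using b conf_out[of \<beta> N i] N by (cases "i = N") (auto simp: restrict_def)
    qed
    ultimately show "\<beta> \<in> ?h ` configs M" by blast
  next
    fix \<beta> assume "\<beta> \<in> ?h ` configs M"
    then obtain \<beta>' where b': "\<beta>' \<in> configs M" "\<beta> = ?h \<beta>'" by auto
    then show "\<beta> \<in> {\<beta>\<in>configs N. \<beta> N = 1}" unfolding configs_def N
      by (auto simp: PiE_def Pi_def extensional_def)
  qed
  have inj: "inj_on ?h (configs M)"
  proof (rule inj_onI)
    fix x y assume xy: "x \<in> configs M" "y \<in> configs M" "?h x = ?h y"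
    show "x = y"
    proof
      fix i show "x i = y i"
      proof (cases "i = N")
        case True then show ?thesis using conf_out[OF xy(1), of i] conf_out[OF xy(2), of i] N by auto
      next
        case False then show ?thesis using fun_cong[OF xy(3), of i] by auto
      qed
    qed
  qed
  have r: "\<beta>' \<in> configs M \<Longrightarrow> restrict (?h \<beta>') {1..M} = \<beta>'" for \<beta>'
  proof
    fix i assume "\<beta>' \<in> configs M"
    then show "restrict (?h \<beta>') {1..M} i = \<beta>' i" using conf_out[of \<beta>' M i] N by (auto simp: restrict_def)
  qed
  have "(\<Sum>\<beta>\<in>configs N. if \<beta> N = 1 then g (restrict \<beta> {1..M}) else 0) = (\<Sum>\<beta>\<in>{\<beta>\<in>configs N. \<beta> N = 1}. g (restrict \<beta> {1..M}))"
    by (simp add: sum.inter_filter fin_configs)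
  also have "\<dots> = (\<Sum>\<beta>'\<in>configs M. g (restrict (?h \<beta>') {1..M}))"
    unfolding img by (rule sum.reindex[OF inj, unfolded comp_def])
  also have "\<dots> = (\<Sum>\<beta>'\<in>configs M. g \<beta>')"
    by (intro sum.cong refl) (simp add: r)
  finally show ?thesis .
qed

end

context sv begin

lemma Cop_last1:
  assumes N: "N = Suc M" and dN: "\<delta> N = 1"
  shows "Cop t a b c d e f N y w \<delta> \<beta> = (if \<beta> N = 1 then e*y + t*f*w N else 0) * Cop t a b c d e f M y w (restrict \<delta> {1..M}) (restrict \<beta> {1..M})"
proof -
  have "Trow y w M 0 1 \<delta> \<beta> = Trow y w M 0 1 (restrict \<delta> {1..M}) (restrict \<beta> {1..M})"
    by (rule Trow_cong) auto
  moreover have "Trow y w (Suc M) 0 1 \<delta> \<beta> = (if \<beta> (Suc M) = 1 then e*y + t*f*w (Suc M) else 0) * Trow y w M 0 1 \<delta> \<beta>"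
    using dN N by (simp add: Lop_def)
  ultimately show ?thesis unfolding Cop_Trow N by simp
qed

lemma Zvec_frozen:
  assumes N: "N = Suc M"
  shows "\<delta> \<in> configs N \<Longrightarrow> \<delta> N = 1 \<Longrightarrow> Zvec t a b c d e f N u w k \<delta> = (\<Prod>i=1..k. e*u i + t*f*w N) * Zvec t a b c d e f M u w k (restrict \<delta> {1..M})"
proof (induction k arbitrary: \<delta>)
  case 0
  have "\<delta> = oneC N \<longleftrightarrow> restrict \<delta> {1..M} = oneC M"
  proof
    assume "\<delta> = oneC N" then show "restrict \<delta> {1..M} = oneC M" using N by (auto simp: fun_eq_iff restrict_def)
  next
    assume h: "restrict \<delta> {1..M} = oneC M"
    show "\<delta> = oneC N"
    proof (rule conf_eqI[OF "0.prems"(1) oneC_conf])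
      fix i assume i: "1 \<le> i" "i \<le> N"
      show "\<delta> i = oneC N i"
      proof (cases "i = N")
        case True then show ?thesis using "0.prems"(2) i by simp
      next
        case False then have "i \<le> M" using i N by auto
        then show ?thesis using fun_cong[OF h, of i] i N by simp
      qed
    qed
  qed
  then show ?case unfolding Zvec.simps by simp
next
  case (Suc k)
  let ?P = "\<lambda>k. \<Prod>i=1..k. e*u i + t*f*w N"
  let ?g = "\<lambda>\<beta>'. (e*u (Suc k) + t*f*w N) * Cop t a b c d e f M (u (Suc k)) w (restrict \<delta> {1..M}) \<beta>' * (?P k * Zvec t a b c d e f M u w k \<beta>')"
  have "Zvec t a b c d e f N u w (Suc k) \<delta> = (\<Sum>\<beta>\<in>configs N. Cop t a b c d e f N (u (Suc k)) w \<delta> \<beta> * Zvec t a b c d e f N u w k \<beta>)"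
    by simp
  also have "\<dots> = (\<Sum>\<beta>\<in>configs N. if \<beta> N = 1 then ?g (restrict \<beta> {1..M}) else 0)"
  proof (rule sum.cong[OF refl])
    fix \<beta> assume b: "\<beta> \<in> configs N"
    show "Cop t a b c d e f N (u (Suc k)) w \<delta> \<beta> * Zvec t a b c d e f N u w k \<beta> = (if \<beta> N = 1 then ?g (restrict \<beta> {1..M}) else 0)"
    proof (cases "\<beta> N = 1")
      case True
      have IH: "Zvec t a b c d e f N u w k \<beta> = ?P k * Zvec t a b c d e f M u w k (restrict \<beta> {1..M})"
        using Suc.IH[OF b True] .
      show ?thesis unfolding Cop_last1[where \<delta>=\<delta> and N=N and M=M and y="u (Suc k)" and w=w and \<beta>=\<beta>, OF N Suc.prems(2)] IH
        by (simp only: True simp_thms if_True mult_ac)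
    next
      case False
      show ?thesis unfolding Cop_last1[where \<delta>=\<delta> and N=N and M=M and y="u (Suc k)" and w=w and \<beta>=\<beta>, OF N Suc.prems(2)]
        using False by simp
    qed
  qed
  also have "\<dots> = (\<Sum>\<beta>'\<in>configs M. ?g \<beta>')" by (rule sum_configs_last[OF N])
  also have "\<dots> = ?P (Suc k) * Zvec t a b c d e f M u w (Suc k) (restrict \<delta> {1..M})"
    by (simp add: sum_distrib_left prod.cl_ivl_Suc mult_ac)
  finally show ?case .
qed

lemma Zbar_spec:
  assumes N: "N = Suc M" and ey: "e*x + f*w N = 0"
  shows "Zbar t a b c d e f N (u(N := x)) w = (1-t)*d*w N * (\<Prod>i=1..M. a*x + b*w i) * (\<Prod>i=1..M. e*u i + t*f*w N) * Zbar t a b c d e f M u w"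
proof -
  have r: "restrict (eN N) {1..M} = zeroC M" using N by (auto simp: eN_def fun_eq_iff restrict_def)
  have e1: "eN N N = 1" by (simp add: eN_def)
  have ec: "eN N \<in> configs N" using eN_conf N by simp
  have zb: "Zbar t a b c d e f M u w = Zvec t a b c d e f M u w M (zeroC M)" by (simp add: Zbar_def)
  show ?thesis unfolding Zbar_top[where u=u and x=x and w=w, OF N ey] Zvec_frozen[where u=u and w=w and k=M, OF N ec e1] r zb
    by (simp only: mult_ac)
qed

end

lemma det_rowscale:
  fixes r :: "nat \<Rightarrow> 'a :: comm_ring_1"
  shows "det (mat n n (\<lambda>(i,j). r i * B i j)) = (\<Prod>i<n. r i) * det (mat n n (\<lambda>(i,j). B i j))"
proof -
  have pl: "p permutes {0..<n} \<Longrightarrow> i < n \<Longrightarrow> p i < n" for p i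
    using permutes_in_image[of p "{0..<n}" i] by auto
  have "det (mat n n (\<lambda>(i,j). r i * B i j)) = (\<Sum>p\<in>{p. p permutes {0..<n}}. signof p * (\<Prod>i=0..<n. r i * B i (p i)))"
    by (subst det_def'[of _ n]) (auto intro!: sum.cong prod.cong simp: pl)
  also have "\<dots> = (\<Sum>p\<in>{p. p permutes {0..<n}}. (\<Prod>i<n. r i) * (signof p * (\<Prod>i=0..<n. B i (p i))))"
    by (intro sum.cong refl) (simp add: prod.distrib atLeast0LessThan mult_ac)
  also have "\<dots> = (\<Prod>i<n. r i) * det (mat n n (\<lambda>(i,j). B i j))"
    by (subst det_def'[of _ n]) (auto simp: sum_distrib_left pl intro!: sum.cong prod.cong)
  finally show ?thesis .
qed

context sv begin

definition "AB u w j k = (a*t*u j + b*w k) * (e*u j + t*f*w k)"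
definition "Gmat N u w = mat N N (\<lambda>(i,k). \<Prod>l\<in>{0..<N}-{k}. AB u w (Suc i) (Suc l))"
definition "Gm N u w = det (Gmat N u w)"

lemma Gmat_carrier: "Gmat N u w \<in> carrier_mat N N" by (simp add: Gmat_def)

lemma Gmat_idx: "i < N \<Longrightarrow> k < N \<Longrightarrow> Gmat N u w $$ (i,k) = (\<Prod>l\<in>{0..<N}-{k}. AB u w (Suc i) (Suc l))"
  by (simp add: Gmat_def)

lemma Gm_swap:
  assumes j: "1 \<le> j" "Suc j \<le> N"
  shows "Gm N u (sw w j) = - Gm N u w"
proof -
  let ?p = "j - 1" and ?q = j
  define \<tau> where "\<tau> l = (if l = ?p then ?q else if l = ?q then ?p else l)" for l
  have pq: "?p < N" "?q < N" "?p \<noteq> ?q" using j by auto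
  have sw: "(sw w j) (Suc l) = w (Suc (\<tau> l))" for l
    using j by (auto simp: \<tau>_def)
  have inv: "\<tau> (\<tau> l) = l" for l by (auto simp: \<tau>_def)
  have tS: "l < N \<Longrightarrow> \<tau> l < N" for l using pq by (auto simp: \<tau>_def)
  have img: "k < N \<Longrightarrow> \<tau> ` ({0..<N} - {k}) = {0..<N} - {\<tau> k}" for k
  proof (intro equalityI subsetI)
    fix x k assume "k < N" "x \<in> \<tau> ` ({0..<N} - {k})"
    then obtain l where l: "l \<in> {0..<N} - {k}" "x = \<tau> l" by blast
    have "\<tau> l \<noteq> \<tau> k"
    proof
      assume "\<tau> l = \<tau> k"
      then have "\<tau> (\<tau> l) = \<tau> (\<tau> k)" by simp
      then have "l = k" using inv by simp
      then show False using l by simp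
    qed
    then show "x \<in> {0..<N} - {\<tau> k}" using tS l by auto
  next
    fix x k assume "k < N" "x \<in> {0..<N} - {\<tau> k}"
    then show "x \<in> \<tau> ` ({0..<N} - {k})" using tS inv by (intro image_eqI[of _ _ "\<tau> x"]) auto
  qed
  have injt: "inj_on \<tau> A" for A by (rule inj_onI) (metis inv)
  have "Gmat N u (sw w j) = swapcols ?p ?q (Gmat N u w)"
  proof (rule eq_matI)
    fix i k assume ik: "i < dim_row (swapcols ?p ?q (Gmat N u w))" "k < dim_col (swapcols ?p ?q (Gmat N u w))"
    then have ik': "i < N" "k < N" by (auto simp: Gmat_def)
    have "Gmat N u (sw w j) $$ (i,k) = (\<Prod>l\<in>{0..<N}-{k}. AB u w (Suc i) (Suc (\<tau> l)))"
      by (simp only: Gmat_idx[OF ik'] AB_def sw)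
    also have "\<dots> = (\<Prod>l\<in>{0..<N}-{\<tau> k}. AB u w (Suc i) (Suc l))"
      using prod.reindex[OF injt, of "\<lambda>l. AB u w (Suc i) (Suc l)" "{0..<N}-{k}"] img[OF ik'(2)] by simp
    also have "\<dots> = swapcols ?p ?q (Gmat N u w) $$ (i,k)"
      using ik' pq by (auto simp: Gmat_idx Gmat_def \<tau>_def)
    finally show "Gmat N u (sw w j) $$ (i,k) = swapcols ?p ?q (Gmat N u w) $$ (i,k)" .
  qed (auto simp: Gmat_def)
  then show ?thesis unfolding Gm_def using det_swapcols[OF pq Gmat_carrier] by simp
qed

lemma Gm_rows:
  assumes "i \<noteq> i'" "1 \<le> i" "i \<le> N" "1 \<le> i'" "i' \<le> N" "u i = u i'"
  shows "Gm N u w = 0"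
  unfolding Gm_def
proof (rule det_identical_rows[OF Gmat_carrier, of "i - 1" "i' - 1"])
  show "i - 1 \<noteq> i' - 1" "i - 1 < N" "i' - 1 < N" using assms by auto
  show "row (Gmat N u w) (i - 1) = row (Gmat N u w) (i' - 1)"
  proof (rule eq_vecI)
    fix k assume "k < dim_vec (row (Gmat N u w) (i' - 1))"
    then have k: "k < N" by (simp add: Gmat_def)
    show "row (Gmat N u w) (i - 1) $ k = row (Gmat N u w) (i' - 1) $ k"
      using k assms by (simp add: Gmat_def AB_def)
  qed (simp add: Gmat_def)
qed

lemma Gm_cols:
  assumes "k \<noteq> k'" "1 \<le> k" "k \<le> N" "1 \<le> k'" "k' \<le> N" "w k = w k'"
  shows "Gm N u w = 0"
  unfolding Gm_def
proof (rule det_identical_columns[OF Gmat_carrier, of "k - 1" "k' - 1"])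
  show "k - 1 \<noteq> k' - 1" "k - 1 < N" "k' - 1 < N" using assms by auto
  show "col (Gmat N u w) (k - 1) = col (Gmat N u w) (k' - 1)"
  proof (rule eq_vecI)
    fix i assume "i < dim_vec (col (Gmat N u w) (k' - 1))"
    then have i: "i < N" by (simp add: Gmat_def)
    let ?g = "\<lambda>l. AB u w (Suc i) (Suc l)"
    let ?S = "{0..<N} - {k - 1, k' - 1}"
    have gk: "?g (k - 1) = ?g (k' - 1)" using assms by (simp add: AB_def)
    have "(\<Prod>l\<in>{0..<N}-{k - 1}. ?g l) = ?g (k' - 1) * (\<Prod>l\<in>?S. ?g l)"
    proof -
      have eq: "{0..<N}-{k - 1} = insert (k' - 1) ?S" using assms by auto
      show ?thesis unfolding eq by (rule prod.insert) auto
    qed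
    moreover have "(\<Prod>l\<in>{0..<N}-{k' - 1}. ?g l) = ?g (k - 1) * (\<Prod>l\<in>?S. ?g l)"
    proof -
      have eq: "{0..<N}-{k' - 1} = insert (k - 1) ?S" using assms by auto
      show ?thesis unfolding eq by (rule prod.insert) auto
    qed
    moreover have "col (Gmat N u w) (k - 1) $ i = (\<Prod>l\<in>{0..<N}-{k - 1}. ?g l)"
      "col (Gmat N u w) (k' - 1) $ i = (\<Prod>l\<in>{0..<N}-{k' - 1}. ?g l)"
    proof -
      have dims: "dim_row (Gmat N u w) = N" "dim_col (Gmat N u w) = N" by (simp_all add: Gmat_def)
      have kk: "k - 1 < N" "k' - 1 < N" using assms by auto
      show "col (Gmat N u w) (k - 1) $ i = (\<Prod>l\<in>{0..<N}-{k - 1}. ?g l)"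
        using index_col[of i "Gmat N u w" "k - 1"] dims kk i Gmat_idx[OF i kk(1)] by simp
      show "col (Gmat N u w) (k' - 1) $ i = (\<Prod>l\<in>{0..<N}-{k' - 1}. ?g l)"
        using index_col[of i "Gmat N u w" "k' - 1"] dims kk i Gmat_idx[OF i kk(2)] by simp
    qed
    ultimately show "col (Gmat N u w) (k - 1) $ i = col (Gmat N u w) (k' - 1) $ i"
      using gk by (simp only:)
  qed (simp add: Gmat_def)
qed

end

context sv begin

lemma Gm_spec:
  assumes N: "N = Suc M" and ax: "a*t*x + b*w N = 0"
  shows "Gm N (u(N := x)) w = (\<Prod>l<M. AB (u(N := x)) w N (Suc l)) * ((\<Prod>i<M. AB u w (Suc i) N) * Gm M u w)"
proof -
  let ?A = "Gmat N (u(N := x)) w"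
  have MN: "M < N" using N by simp
  have lap: "det ?A = (\<Sum>j<N. ?A $$ (M,j) * cofactor ?A M j)"
    by (rule laplace_expansion_row[OF Gmat_carrier MN])
  have z: "?A $$ (M,j) = 0" if j: "j < M" for j
  proof -
    have "?A $$ (M,j) = (\<Prod>l\<in>{0..<N}-{j}. AB (u(N := x)) w (Suc M) (Suc l))"
      using j N by (simp add: Gmat_idx)
    also have "\<dots> = 0"
    proof (rule prod_zero)
      show "\<exists>l\<in>{0..<N}-{j}. AB (u(N := x)) w (Suc M) (Suc l) = 0"
        using j N ax by (intro bexI[where x=M]) (auto simp: AB_def)
    qed simp
    finally show ?thesis .
  qed
  have s1: "(\<Sum>j<N. ?A $$ (M,j) * cofactor ?A M j) = (\<Sum>j<M. ?A $$ (M,j) * cofactor ?A M j) + ?A $$ (M,M) * cofactor ?A M M"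
    using N by simp
  have s2: "(\<Sum>j<M. ?A $$ (M,j) * cofactor ?A M j) = 0" using z by simp
  have "det ?A = ?A $$ (M,M) * cofactor ?A M M" using lap s1 s2 by simp
  moreover have "?A $$ (M,M) = (\<Prod>l<M. AB (u(N := x)) w N (Suc l))"
  proof -
    have "{0..<Suc M} - {M} = {..<M}" by auto
    then show ?thesis using N by (simp add: Gmat_idx)
  qed
  moreover have "cofactor ?A M M = det (mat_delete ?A M M)"
    unfolding cofactor_def by simp
  moreover have "mat_delete ?A M M = mat M M (\<lambda>(i,k). AB u w (Suc i) N * (\<Prod>l\<in>{0..<M}-{k}. AB u w (Suc i) (Suc l)))"
  proof (rule eq_matI)
    fix i k assume "i < dim_row (mat M M (\<lambda>(i,k). AB u w (Suc i) N * (\<Prod>l\<in>{0..<M}-{k}. AB u w (Suc i) (Suc l))))"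
      "k < dim_col (mat M M (\<lambda>(i,k). AB u w (Suc i) N * (\<Prod>l\<in>{0..<M}-{k}. AB u w (Suc i) (Suc l))))"
    then have ik: "i < M" "k < M" by auto
    have ab: "AB (u(N := x)) w (Suc i) l = AB u w (Suc i) l" for l using ik N by (simp add: AB_def)
    have eq: "{0..<N} - {k} = insert M ({0..<M} - {k})" using ik N by auto
    have "mat_delete ?A M M $$ (i,k) = ?A $$ (i,k)"
      using ik N by (simp add: mat_delete_def Gmat_def)
    also have "\<dots> = (\<Prod>l\<in>{0..<N}-{k}. AB u w (Suc i) (Suc l))"
      using ik N by (simp add: Gmat_idx ab[unfolded N])
    also have "\<dots> = AB u w (Suc i) (Suc M) * (\<Prod>l\<in>{0..<M}-{k}. AB u w (Suc i) (Suc l))"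
      unfolding eq by (rule prod.insert) auto
    finally show "mat_delete ?A M M $$ (i,k) = mat M M (\<lambda>(i,k). AB u w (Suc i) N * (\<Prod>l\<in>{0..<M}-{k}. AB u w (Suc i) (Suc l))) $$ (i,k)"
      using ik N by simp
  qed (auto simp: N Gmat_def)
  moreover have "det (mat M M (\<lambda>(i,k). AB u w (Suc i) N * (\<Prod>l\<in>{0..<M}-{k}. AB u w (Suc i) (Suc l))))
      = (\<Prod>i<M. AB u w (Suc i) N) * Gm M u w"
    unfolding det_rowscale Gm_def Gmat_def by simp
  ultimately show ?thesis unfolding Gm_def by simp
qed

lemma AB_pf: "pf (\<lambda>x. AB (u(i := x)) w j k) 2"
proof (cases "j = i")
  case True
  have "pf (\<lambda>x. ((a*t) * x + b*w k) * (e * x + t*f*w k)) (1 + 1)"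
    by (rule pf_mult[OF pf_lin pf_lin])
  then show ?thesis using True by (simp add: AB_def mult.assoc)
next
  case False
  then show ?thesis by (simp add: AB_def pf_const)
qed

lemma AB_const: "j \<noteq> i \<Longrightarrow> AB (u(i := x)) w j k = AB u w j k"
  by (simp add: AB_def)

lemma pl_perm: "p permutes {0..<(n::nat)} \<Longrightarrow> i < n \<Longrightarrow> p i < n"
  using permutes_in_image[of p "{0..<n}" i] by auto

lemma Gm_pf_u: "pf (\<lambda>x. Gm N (u(i := x)) w) (N * (2*N))"
proof -
  have "pf (\<lambda>x. \<Sum>p\<in>{p. p permutes {0..<N}}. signof p * (\<Prod>r=0..<N. \<Prod>l\<in>{0..<N}-{p r}. AB (u(i := x)) w (Suc r) (Suc l))) (N * (2*N))"
  proof (rule pf_sum)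
    show "finite {p. p permutes {0..<N}}" by (simp add: finite_permutations)
  next
    fix p assume "p \<in> {p. p permutes {0..<N}}"
    have "pf (\<lambda>x. \<Prod>r=0..<N. \<Prod>l\<in>{0..<N}-{p r}. AB (u(i := x)) w (Suc r) (Suc l)) (N * (2*N))"
    proof (rule pf_prod'[where d="\<lambda>_. 2*N"])
      fix r
      show "pf (\<lambda>x. \<Prod>l\<in>{0..<N}-{p r}. AB (u(i := x)) w (Suc r) (Suc l)) (2*N)"
      proof (rule pf_prod'[where d="\<lambda>_. 2"])
        have "card ({0..<N}-{p r}) \<le> card {0..<N}" by (rule card_mono) auto
        then show "(\<Sum>l\<in>{0..<N}-{p r}. 2) \<le> 2*N" by simp
      qed (auto intro: AB_pf)
    qed auto
    then show "pf (\<lambda>x. signof p * (\<Prod>r=0..<N. \<Prod>l\<in>{0..<N}-{p r}. AB (u(i := x)) w (Suc r) (Suc l))) (N * (2*N))"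
      using pf_mult'[OF pf_const[where n=0]] by simp
  qed
  moreover have "Gm N (u(i := x)) w = (\<Sum>p\<in>{p. p permutes {0..<N}}. signof p * (\<Prod>r=0..<N. \<Prod>l\<in>{0..<N}-{p r}. AB (u(i := x)) w (Suc r) (Suc l)))" for x
    unfolding Gm_def det_def'[OF Gmat_carrier]
    by (intro sum.cong refl arg_cong2[where f="(*)"] prod.cong) (auto simp: Gmat_idx pl_perm)
  ultimately show ?thesis by simp
qed

lemma Gm_pf_uN:
  assumes N: "N = Suc M"
  shows "pf (\<lambda>x. Gm N (u(N := x)) w) (2*M)"
proof -
  have "pf (\<lambda>x. \<Sum>p\<in>{p. p permutes {0..<N}}. signof p * (\<Prod>r=0..<N. \<Prod>l\<in>{0..<N}-{p r}. AB (u(N := x)) w (Suc r) (Suc l))) (2*M)"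
  proof (rule pf_sum)
    show "finite {p. p permutes {0..<N}}" by (simp add: finite_permutations)
  next
    fix p assume p: "p \<in> {p. p permutes {0..<N}}"
    have "pf (\<lambda>x. \<Prod>r=0..<N. \<Prod>l\<in>{0..<N}-{p r}. AB (u(N := x)) w (Suc r) (Suc l)) (2*M)"
    proof (rule pf_prod'[where d="\<lambda>r. if r = M then 2*M else 0"])
      fix r assume r: "r \<in> {0..<N}"
      show "pf (\<lambda>x. \<Prod>l\<in>{0..<N}-{p r}. AB (u(N := x)) w (Suc r) (Suc l)) (if r = M then 2*M else 0)"
      proof (cases "r = M")
        case True
        have pr: "p r < N" using pl_perm p r by auto
        show ?thesis
        proof (rule pf_prod'[where d="\<lambda>_. 2"])
          have "card ({0..<N}-{p r}) = M" using pr N by simp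
          then show "(\<Sum>l\<in>{0..<N}-{p r}. 2) \<le> (if r = M then 2*M else 0)" using True by simp
        qed (auto intro: AB_pf)
      next
        case False
        then have "Suc r \<noteq> N" using r N by auto
        then show ?thesis using False by (simp add: AB_const pf_const)
      qed
    next
      show "(\<Sum>r\<in>{0..<N}. if r = M then 2*M else 0) \<le> 2*M" using N by simp
    qed simp
    then show "pf (\<lambda>x. signof p * (\<Prod>r=0..<N. \<Prod>l\<in>{0..<N}-{p r}. AB (u(N := x)) w (Suc r) (Suc l))) (2*M)"
      using pf_mult'[OF pf_const[where n=0]] by simp
  qed
  moreover have "Gm N (u(N := x)) w = (\<Sum>p\<in>{p. p permutes {0..<N}}. signof p * (\<Prod>r=0..<N. \<Prod>l\<in>{0..<N}-{p r}. AB (u(N := x)) w (Suc r) (Suc l)))" for x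
    unfolding Gm_def det_def'[OF Gmat_carrier]
    by (intro sum.cong refl arg_cong2[where f="(*)"] prod.cong) (auto simp: Gmat_idx pl_perm)
  ultimately show ?thesis by simp
qed

end

context sv begin

definition "Vu (N::nat) u = (\<Prod>k=1..N. \<Prod>j\<in>{1..<k}. (u j - u k :: complex))"
definition "Ww (N::nat) w = (\<Prod>k=1..N. \<Prod>j\<in>{1..<k}. (w k - w j :: complex))"
definition "Pw (N::nat) w = (\<Prod>j=1..N. (1-t)*d*w j)"
definition "cc = t^2*c*d"
definition "Phi N u w \<longleftrightarrow> Zbar t a b c d e f N u w * cc^(N*(N-1) div 2) * Vu N u * Ww N w = Pw N w * Gm N u w"

lemma prod_sw:
  assumes "j \<in> A" "Suc j \<in> A"
  shows "(\<Prod>l\<in>A. g (sw w j l)) = (\<Prod>l\<in>A. g (w l))"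
proof -
  define \<tau> where "\<tau> l = (if l = j then Suc j else if l = Suc j then j else l)" for l
  have sw: "sw w j l = w (\<tau> l)" for l by (auto simp: \<tau>_def)
  have inv: "\<tau> (\<tau> l) = l" for l by (auto simp: \<tau>_def)
  have inj: "inj_on \<tau> A" by (rule inj_onI) (metis inv)
  have img: "\<tau> ` A = A"
  proof (intro equalityI subsetI)
    fix x assume "x \<in> \<tau> ` A" then show "x \<in> A" using assms by (auto simp: \<tau>_def)
  next
    fix x assume "x \<in> A" then show "x \<in> \<tau> ` A" using assms inv by (intro image_eqI[of _ _ "\<tau> x"]) (auto simp: \<tau>_def)
  qed
  have "(\<Prod>l\<in>A. g (sw w j l)) = (\<Prod>l\<in>A. g (w (\<tau> l)))" by (simp only: sw)
  also have "\<dots> = (\<Prod>l\<in>\<tau> ` A. g (w l))" by (simp add: prod.reindex[OF inj])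
  also have "\<dots> = (\<Prod>l\<in>A. g (w l))" by (simp add: img)
  finally show ?thesis .
qed

lemma Pw_sw: "1 \<le> j \<Longrightarrow> Suc j \<le> N \<Longrightarrow> Pw N (sw w j) = Pw N w"
  unfolding Pw_def by (rule prod_sw) auto

lemma Ww_cong: assumes h: "\<And>j. 1 \<le> j \<Longrightarrow> j \<le> n \<Longrightarrow> w j = w' j" shows "Ww n w = Ww n w'"
  unfolding Ww_def
proof (intro prod.cong refl)
  fix k j assume "k \<in> {1..n}" "j \<in> {1..<k}"
  then have jk: "1 \<le> j" "j \<le> n" "1 \<le> k" "k \<le> n" by auto
  then show "w k - w j = w' k - w' j" using h[OF jk(1,2)] h[OF jk(3,4)] by simp
qed

lemma Vu_cong: assumes h: "\<And>j. 1 \<le> j \<Longrightarrow> j \<le> n \<Longrightarrow> u j = u' j" shows "Vu n u = Vu n u'"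
  unfolding Vu_def
proof (intro prod.cong refl)
  fix k j assume "k \<in> {1..n}" "j \<in> {1..<k}"
  then have jk: "1 \<le> j" "j \<le> n" "1 \<le> k" "k \<le> n" by auto
  then show "u j - u k = u' j - u' k" using h[OF jk(1,2)] h[OF jk(3,4)] by simp
qed

lemma Ww_Suc: "Ww (Suc n) w = Ww n w * (\<Prod>j\<in>{1..<Suc n}. (w (Suc n) - w j))"
  unfolding Ww_def by (simp add: prod.cl_ivl_Suc)

lemma Vu_Suc: "Vu (Suc n) u = Vu n u * (\<Prod>j\<in>{1..<Suc n}. (u j - u (Suc n)))"
  unfolding Vu_def by (simp add: prod.cl_ivl_Suc)

lemma Ww_sw:
  assumes j: "1 \<le> j" "Suc j \<le> N"
  shows "Ww N (sw w j) = - Ww N w"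
proof -
  obtain i where ji: "j = Suc i" using j by (cases j) auto
  obtain k where Nk: "N = Suc j + k" using j le_Suc_ex by blast
  have base: "Ww (Suc j) (sw w j) = - Ww (Suc j) w"
  proof -
    have c: "Ww i (sw w j) = Ww i w" by (rule Ww_cong) (auto simp: ji)
    have p1: "(\<Prod>l\<in>{1..<j}. (sw w j j - sw w j l)) = (\<Prod>l\<in>{1..<j}. (w (Suc j) - w l))"
      by (intro prod.cong refl) auto
    have p2: "(\<Prod>l\<in>{1..<j}. (sw w j (Suc j) - sw w j l)) = (\<Prod>l\<in>{1..<j}. (w j - w l))"
      by (intro prod.cong refl) auto
    have sp: "\<And>g. (\<Prod>l\<in>{1..<Suc j}. g l) = (\<Prod>l\<in>{1..<j}. g l) * g j"
      using j by (simp add: prod.atLeastLessThan_Suc)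
    have "Ww (Suc j) (sw w j) = Ww i (sw w j) * (\<Prod>l\<in>{1..<j}. (sw w j j - sw w j l)) *
        ((\<Prod>l\<in>{1..<j}. (sw w j (Suc j) - sw w j l)) * (sw w j (Suc j) - sw w j j))"
      unfolding Ww_Suc ji[symmetric] sp[of "\<lambda>l. sw w j (Suc j) - sw w j l"] unfolding ji Ww_Suc by simp
    also have "\<dots> = Ww i w * (\<Prod>l\<in>{1..<j}. (w (Suc j) - w l)) * ((\<Prod>l\<in>{1..<j}. (w j - w l)) * (w j - w (Suc j)))"
      unfolding c p1 p2 by simp
    also have "\<dots> = - (Ww i w * (\<Prod>l\<in>{1..<j}. (w j - w l)) * ((\<Prod>l\<in>{1..<j}. (w (Suc j) - w l)) * (w (Suc j) - w j)))"
      by (simp add: algebra_simps)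
    also have "\<dots> = - Ww (Suc j) w"
      unfolding Ww_Suc ji[symmetric] sp[of "\<lambda>l. w (Suc j) - w l"] unfolding ji Ww_Suc by simp
    finally show ?thesis .
  qed
  have "Ww (Suc j + m) (sw w j) = - Ww (Suc j + m) w" for m
  proof (induction m)
    case 0 then show ?case using base by (simp only: add_0_right)
  next
    case (Suc m)
    have "(\<Prod>l\<in>{1..<Suc (Suc j + m)}. (w (Suc (Suc j + m)) - sw w j l)) = (\<Prod>l\<in>{1..<Suc (Suc j + m)}. (w (Suc (Suc j + m)) - w l))"
      using prod_sw[of j "{1..<Suc (Suc j + m)}" "\<lambda>z. w (Suc (Suc j + m)) - z" w] j by simp
    moreover have "sw w j (Suc (Suc j + m)) = w (Suc (Suc j + m))" by simp
    ultimately show ?case using Suc.IH by (simp only: add_Suc_right Ww_Suc) simp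
  qed
  then show ?thesis using Nk by simp
qed

lemma Phi_sw:
  assumes j: "1 \<le> j" "Suc j \<le> N"
  shows "Phi N u (sw w j) \<longleftrightarrow> Phi N u w"
  unfolding Phi_def Zbar_sym[OF j, of u w, symmetric] Ww_sw[OF j] Gm_swap[OF j] Pw_sw[OF j]
  by (simp add: algebra_simps)

definition "rotw k N w = (\<lambda>i. if i < k then w i else if i < N then w (Suc i) else if i = N then w k else w i)"

lemma rotw_N: "rotw N N w = w" by (auto simp: rotw_def fun_eq_iff)

lemma rotw_step: "k < N \<Longrightarrow> rotw k N w = rotw (Suc k) N (sw w k)"
  by (auto simp: rotw_def fun_eq_iff)

lemma rotw_last: "k \<le> N \<Longrightarrow> rotw k N w N = w k" by (auto simp: rotw_def)

lemma Phi_rot: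
  assumes "1 \<le> k" "k \<le> N"
  shows "Phi N u (rotw k N w) \<longleftrightarrow> Phi N u w"
proof -
  have "\<forall>k w. 1 \<le> k \<longrightarrow> N - k = m \<longrightarrow> k \<le> N \<longrightarrow> (Phi N u (rotw k N w) \<longleftrightarrow> Phi N u w)" for m
  proof (induction m)
    case 0
    show ?case
    proof (intro allI impI)
      fix k w assume "1 \<le> k" "N - k = 0" "k \<le> N"
      then have "k = N" by simp
      then show "Phi N u (rotw k N w) \<longleftrightarrow> Phi N u w" by (simp add: rotw_N)
    qed
  next
    case (Suc m)
    show ?case
    proof (intro allI impI)
      fix k w assume k: "1 \<le> k" "N - k = Suc m" "k \<le> N"
      then have kN: "k < N" "Suc k \<le> N" by auto
      have "Phi N u (rotw k N w) \<longleftrightarrow> Phi N u (rotw (Suc k) N (sw w k))" by (simp add: rotw_step[OF kN(1)])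
      also have "\<dots> \<longleftrightarrow> Phi N u (sw w k)" using Suc.IH k by auto
      also have "\<dots> \<longleftrightarrow> Phi N u w" by (rule Phi_sw[OF k(1) kN(2)])
      finally show "Phi N u (rotw k N w) \<longleftrightarrow> Phi N u w" .
    qed
  qed
  then show ?thesis using assms by blast
qed

end

context sv begin

lemma div_lemma: "Suc M * (Suc M - 1) div 2 = M * (M - 1) div 2 + M"
proof -
  have "Suc M * (Suc M - 1) = M * (M - 1) + M * 2" by (cases M) (simp_all add: algebra_simps)
  then show ?thesis by simp
qed

lemma key_factor:
  assumes xd: "x = -(b*w')/(a*t)"
  shows "cc * ((a*x + b*v) * (e*y + t*f*w') * (y - x) * (w' - v)) = ((a*t*x + b*v) * (e*x + t*f*v)) * ((a*t*y + b*w') * (e*y + t*f*w'))"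
  unfolding xd cc_def edef fdef using anz bnz cnz dnz tnz
  by (simp add: field_simps) (simp add: algebra_simps power2_eq_square)

lemma Phi_spec:
  assumes N: "N = Suc M" and ey: "e*x + f*w N = 0" and IH: "Phi M u w"
  shows "Phi N (u(N := x)) w"
proof -
  have xd: "x = -(b*w N)/(a*t)"
  proof -
    have "x = -(f*w N)/e" using ey enz by (simp add: field_simps) (metis add.commute add_eq_0_iff mult.commute)
    then show ?thesis unfolding fdef edef using anz bnz cnz dnz tnz by (simp add: field_simps)
  qed
  have ax: "a*t*x + b*w N = 0" using xd anz tnz by (simp add: field_simps)
  let ?F = "\<lambda>i. (a*x + b*w i) * (e*u i + t*f*w N) * (u i - x) * (w N - w i)"
  let ?A1 = "\<lambda>i. AB (u(N := x)) w N i" and ?A2 = "\<lambda>i. AB u w i N"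
  have ivl: "{1..<Suc M} = {1..M}" by auto
  have sh: "\<And>g. (\<Prod>l<M. g (Suc l)) = (\<Prod>i=1..M. (g i :: complex))"
    by (simp only: One_nat_def prod.atLeast1_atMost_eq)
  have Z: "Zbar t a b c d e f N (u(N := x)) w = (1-t)*d*w N * (\<Prod>i=1..M. a*x + b*w i) * (\<Prod>i=1..M. e*u i + t*f*w N) * Zbar t a b c d e f M u w"
    by (rule Zbar_spec[where u=u and x=x and w=w, OF N ey])
  have V: "Vu N (u(N := x)) = Vu M u * (\<Prod>i=1..M. u i - x)"
  proof -
    have "Vu M (u(N := x)) = Vu M u" by (rule Vu_cong) (simp add: N)
    moreover have "(\<Prod>j\<in>{1..<Suc M}. (u(N := x)) j - (u(N := x)) (Suc M)) = (\<Prod>i=1..M. u i - x)"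
      unfolding ivl using N by (intro prod.cong refl) auto
    ultimately show ?thesis unfolding N Vu_Suc by simp
  qed
  have W: "Ww N w = Ww M w * (\<Prod>i=1..M. w N - w i)"
    unfolding N Ww_Suc ivl by simp
  have P: "Pw N w = Pw M w * ((1-t)*d*w N)"
    unfolding N Pw_def by (simp add: prod.cl_ivl_Suc)
  have G: "Gm N (u(N := x)) w = (\<Prod>i=1..M. ?A1 i) * ((\<Prod>i=1..M. ?A2 i) * Gm M u w)"
    using Gm_spec[where u=u and x=x and w=w, OF N ax] sh[of ?A1] sh[of ?A2] by simp
  have E: "N * (N - 1) div 2 = M * (M - 1) div 2 + M" unfolding N by (rule div_lemma)
  have pF: "(\<Prod>i=1..M. a*x + b*w i) * (\<Prod>i=1..M. e*u i + t*f*w N) * (\<Prod>i=1..M. u i - x) * (\<Prod>i=1..M. w N - w i) = (\<Prod>i=1..M. ?F i)"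
    by (simp add: prod.distrib)
  have key: "cc^M * (\<Prod>i=1..M. ?F i) = (\<Prod>i=1..M. ?A1 i) * (\<Prod>i=1..M. ?A2 i)"
  proof -
    have "cc^M * (\<Prod>i=1..M. ?F i) = (\<Prod>i=1..M. cc * ?F i)" by (simp add: prod.distrib)
    also have "\<dots> = (\<Prod>i=1..M. ?A1 i * ?A2 i)"
    proof (rule prod.cong[OF refl])
      fix i assume "i \<in> {1..M}"
      then have "i \<noteq> N" using N by auto
      then show "cc * ?F i = ?A1 i * ?A2 i"
        unfolding AB_def using key_factor[OF xd, of "w i" "u i"] N by simp
    qed
    also have "\<dots> = (\<Prod>i=1..M. ?A1 i) * (\<Prod>i=1..M. ?A2 i)" by (simp add: prod.distrib)
    finally show ?thesis .
  qed
  have "Zbar t a b c d e f N (u(N := x)) w * cc^(N*(N-1) div 2) * Vu N (u(N := x)) * Ww N w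
      = ((1-t)*d*w N) * (Zbar t a b c d e f M u w * cc^(M*(M-1) div 2) * Vu M u * Ww M w) * (cc^M * ((\<Prod>i=1..M. a*x + b*w i) * (\<Prod>i=1..M. e*u i + t*f*w N) * (\<Prod>i=1..M. u i - x) * (\<Prod>i=1..M. w N - w i)))"
    unfolding Z V W E power_add by (simp only: mult_ac)
  also have "\<dots> = ((1-t)*d*w N) * (Pw M w * Gm M u w) * ((\<Prod>i=1..M. ?A1 i) * (\<Prod>i=1..M. ?A2 i))"
    using IH unfolding Phi_def pF key by simp
  also have "\<dots> = Pw N w * Gm N (u(N := x)) w"
    unfolding P G by (simp only: mult_ac)
  finally show ?thesis unfolding Phi_def .
qed

end

context sv begin

lemma upd_pf: "pf (\<lambda>y. (u(i := y)) j) 1"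
proof (cases "j = i")
  case True then show ?thesis by (simp add: pf_id)
next
  case False then show ?thesis by (simp add: pf_const)
qed

lemma Vu_pf_u: "pf (\<lambda>y. Vu N (u(i := y))) (N * N)"
  unfolding Vu_def
proof (rule pf_prod'[where d="\<lambda>_. N"])
  fix k assume k: "k \<in> {1..N}"
  show "pf (\<lambda>y. \<Prod>j\<in>{1..<k}. (u(i := y)) j - (u(i := y)) k) N"
  proof (rule pf_prod'[where d="\<lambda>_. 1"])
    show "(\<Sum>j\<in>{1..<k}. 1) \<le> N" using k by auto
  qed (simp, rule pf_diff[OF upd_pf upd_pf])
qed auto

lemma Vu_pf_uN:
  assumes N: "N = Suc M"
  shows "pf (\<lambda>x. Vu N (u(N := x))) M"
proof -
  have ivl: "{1..<Suc M} = {1..M}" by auto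
  have V: "Vu N (u(N := x)) = Vu M u * (\<Prod>i=1..M. u i - x)" for x
  proof -
    have "Vu M (u(N := x)) = Vu M u" by (rule Vu_cong) (simp add: N)
    moreover have "(\<Prod>j\<in>{1..<Suc M}. (u(N := x)) j - (u(N := x)) (Suc M)) = (\<Prod>i=1..M. u i - x)"
      unfolding ivl using N by (intro prod.cong refl) auto
    ultimately show ?thesis unfolding N Vu_Suc by simp
  qed
  have "pf (\<lambda>x. Vu M u * (\<Prod>i=1..M. u i - x)) M"
  proof (rule pf_mult'[OF pf_const[where n=0]])
    show "pf (\<lambda>x. \<Prod>i=1..M. u i - x) M"
      by (rule pf_prod'[where d="\<lambda>_. 1"]) (auto intro!: pf_diff pf_id)
  qed simp
  then show ?thesis by (simp add: V)
qed

lemma Zbar_pf_u: "pf (\<lambda>y. Zbar t a b c d e f N (u(i := y)) w) (N * N)"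
  unfolding Zbar_def by (rule Zvec_pf_u)

lemma Phi_diff_pf: "\<exists>n. pf (\<lambda>y. Zbar t a b c d e f N (u(i := y)) w * cc^(N*(N-1) div 2) * Vu N (u(i := y)) * Ww N w - Pw N w * Gm N (u(i := y)) w) n"
proof -
  have "pf (\<lambda>y. Zbar t a b c d e f N (u(i := y)) w * cc^(N*(N-1) div 2) * Vu N (u(i := y)) * Ww N w - Pw N w * Gm N (u(i := y)) w) (N*N + 0 + N*N + 0 + 0 + N*(2*N))"
  proof (rule pf_diff)
    show "pf (\<lambda>y. Zbar t a b c d e f N (u(i := y)) w * cc^(N*(N-1) div 2) * Vu N (u(i := y)) * Ww N w) (N*N + 0 + N*N + 0 + 0 + N*(2*N))"
      by (rule pf_mult'[OF pf_mult'[OF pf_mult'[OF Zbar_pf_u pf_const[where n=0]] Vu_pf_u] pf_const[where n=0]]) auto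
    show "pf (\<lambda>y. Pw N w * Gm N (u(i := y)) w) (N*N + 0 + N*N + 0 + 0 + N*(2*N))"
      by (rule pf_mult'[OF pf_const[where n=0] Gm_pf_u]) auto
  qed
  then show ?thesis by blast
qed

lemma Phi_step:
  assumes N: "N = Suc M" and IH: "\<And>u w. Phi M u w"
    and ud: "\<And>i j. i \<in> {1..M} \<Longrightarrow> j \<in> {1..M} \<Longrightarrow> i \<noteq> j \<Longrightarrow> u i \<noteq> u j"
    and wd: "\<And>i j. i \<in> {1..N} \<Longrightarrow> j \<in> {1..N} \<Longrightarrow> i \<noteq> j \<Longrightarrow> w i \<noteq> w j"
    and gen: "\<And>i k. i \<in> {1..M} \<Longrightarrow> k \<in> {1..N} \<Longrightarrow> u i \<noteq> -(f*w k)/e"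
  shows "Phi N u w"
proof -
  let ?D = "\<lambda>x. Zbar t a b c d e f N (u(N := x)) w * cc^(N*(N-1) div 2) * Vu N (u(N := x)) * Ww N w - Pw N w * Gm N (u(N := x)) w"
  have pfD: "pf ?D (M + 0 + M + 0)"
  proof (rule pf_diff)
    have z: "pf (\<lambda>x. Zbar t a b c d e f N (u(N := x)) w) M" using Zbar_pf_uN[of N u w] N by simp
    show "pf (\<lambda>x. Zbar t a b c d e f N (u(N := x)) w * cc^(N*(N-1) div 2) * Vu N (u(N := x)) * Ww N w) (M + 0 + M + 0)"
      by (rule pf_mult'[OF pf_mult'[OF pf_mult'[OF z pf_const[where n=0]] Vu_pf_uN[OF N]] pf_const[where n=0]]) auto
    show "pf (\<lambda>x. Pw N w * Gm N (u(N := x)) w) (M + 0 + M + 0)"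
      by (rule pf_mult'[OF pf_const[where n=0] Gm_pf_uN[OF N]]) auto
  qed
  let ?A = "u ` {1..M}" and ?B = "(\<lambda>k. -(f*w k)/e) ` {1..N}"
  have cA: "card ?A = M"
  proof -
    have "inj_on u {1..M}" using ud by (meson inj_onI)
    then show ?thesis by (simp add: card_image)
  qed
  have cB: "card ?B = N"
  proof -
    have "inj_on (\<lambda>k. -(f*w k)/e) {1..N}"
    proof (rule inj_onI)
      fix i j assume ij: "i \<in> {1..N}" "j \<in> {1..N}" "-(f*w i)/e = -(f*w j)/e"
      then have "w i = w j" using fnz enz by (simp add: field_simps)
      then show "i = j" using wd ij by blast
    qed
    then show ?thesis by (simp add: card_image)
  qed
  have disj: "?A \<inter> ?B = {}" using gen by auto
  have cS: "card (?A \<union> ?B) = M + N" using cA cB disj by (simp add: card_Un_disjoint)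
  have roots: "?D x = 0" if x: "x \<in> ?A \<union> ?B" for x
  proof (cases "x \<in> ?A")
    case True
    then obtain j where j: "j \<in> {1..M}" "x = u j" by auto
    have "Vu N (u(N := x)) = 0"
    proof -
      have "Vu N (u(N := x)) = Vu M (u(N := x)) * (\<Prod>i\<in>{1..<Suc M}. (u(N := x)) i - (u(N := x)) (Suc M))"
        unfolding N Vu_Suc ..
      moreover have "(\<Prod>i\<in>{1..<Suc M}. (u(N := x)) i - (u(N := x)) (Suc M)) = 0"
        using j N by (intro prod_zero) (auto intro!: bexI[where x=j])
      ultimately show ?thesis by simp
    qed
    moreover have "Gm N (u(N := x)) w = 0"
      by (rule Gm_rows[of j N]) (use j N in auto)
    ultimately show ?thesis by simp
  next
    case False
    then obtain k where k: "k \<in> {1..N}" "x = -(f*w k)/e" using x by auto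
    let ?w = "rotw k N w"
    have ey: "e*x + f*?w N = 0" using k enz by (simp add: rotw_last)
    have "Phi N (u(N := x)) ?w" by (rule Phi_spec[where u=u and x=x and w="?w", OF N ey IH])
    then have "Phi N (u(N := x)) w" using Phi_rot[of k N "u(N := x)" w] k by simp
    then show ?thesis unfolding Phi_def by simp
  qed
  have "?D (u N) = 0"
    by (rule pf_roots[where S="?A \<union> ?B", OF pfD _ _ roots]) (use cS N in auto)
  then show ?thesis unfolding Phi_def by simp
qed

end

context sv begin

lemma Phi0: "Phi 0 u w"
proof -
  have e0: "restrict (\<lambda>_. 0::nat) {} = restrict (\<lambda>_. 1) {}" by (rule ext) simp
  have "Zbar t a b c d e f 0 u w = 1" unfolding Zbar_def by (simp add: e0)
  moreover have "Gm 0 u w = 1" unfolding Gm_def using Gmat_carrier[of 0 u w] by simp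
  ultimately show ?thesis unfolding Phi_def Vu_def Ww_def Pw_def by simp
qed

lemma Ww_zero:
  assumes "i \<noteq> j" "i \<in> {1..N}" "j \<in> {1..N}" "w i = w j"
  shows "Ww N w = 0"
proof -
  have "\<exists>p q. p \<in> {1..N} \<and> q \<in> {1..<p} \<and> w p = w q"
  proof (cases "j < i")
    case True then show ?thesis using assms by (intro exI[of _ i] exI[of _ j]) auto
  next
    case False then have "i < j" using assms by auto
    then show ?thesis using assms by (intro exI[of _ j] exI[of _ i]) auto
  qed
  then obtain p q where pq: "p \<in> {1..N}" "q \<in> {1..<p}" "w p = w q" by blast
  have "\<exists>a\<in>{1..<p}. w p - w a = 0" using pq by (intro bexI[where x=q]) auto
  then have "(\<Prod>j\<in>{1..<p}. w p - w j) = 0" by (rule prod_zero[rotated]) simp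
  then have "\<exists>k\<in>{1..N}. (\<Prod>j\<in>{1..<k}. w k - w j) = 0" using pq by (intro bexI[where x=p]) auto
  then show ?thesis unfolding Ww_def by (rule prod_zero[rotated]) simp
qed

lemma Vu_zero:
  assumes "i \<noteq> j" "i \<in> {1..N}" "j \<in> {1..N}" "u i = u j"
  shows "Vu N u = 0"
proof -
  have "\<exists>p q. p \<in> {1..N} \<and> q \<in> {1..<p} \<and> u p = u q"
  proof (cases "j < i")
    case True then show ?thesis using assms by (intro exI[of _ i] exI[of _ j]) auto
  next
    case False then have "i < j" using assms by auto
    then show ?thesis using assms by (intro exI[of _ j] exI[of _ i]) auto
  qed
  then obtain p q where pq: "p \<in> {1..N}" "q \<in> {1..<p}" "u p = u q" by blast
  have "\<exists>a\<in>{1..<p}. u a - u p = 0" using pq by (intro bexI[where x=q]) auto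
  then have "(\<Prod>j\<in>{1..<p}. u j - u p) = 0" by (rule prod_zero[rotated]) simp
  then have "\<exists>k\<in>{1..N}. (\<Prod>j\<in>{1..<k}. u j - u k) = 0" using pq by (intro bexI[where x=p]) auto
  then show ?thesis unfolding Vu_def by (rule prod_zero[rotated]) simp
qed

lemma Phi_all: "Phi N u w"
proof (induction N arbitrary: u w)
  case 0 then show ?case by (rule Phi0)
next
  case (Suc M u w)
  let ?N = "Suc M"
  show ?case
  proof (cases "\<exists>i j. i \<noteq> j \<and> i \<in> {1..?N} \<and> j \<in> {1..?N} \<and> w i = w j")
    case True
    then obtain i j where ij: "i \<noteq> j" "i \<in> {1..?N}" "j \<in> {1..?N}" "w i = w j" by blast
    have "Ww ?N w = 0" by (rule Ww_zero[OF ij])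
    moreover have "Gm ?N u w = 0" by (rule Gm_cols[of i j]) (use ij in auto)
    ultimately show ?thesis unfolding Phi_def by simp
  next
    case False
    then have wd: "\<And>i j. i \<in> {1..?N} \<Longrightarrow> j \<in> {1..?N} \<Longrightarrow> i \<noteq> j \<Longrightarrow> w i \<noteq> w j" by blast
    let ?S = "(\<lambda>k. -(f*w k)/e) ` {1..?N}"
    have claim: "\<forall>u. (\<forall>i. m < i \<and> i \<le> M \<longrightarrow> u i \<notin> ?S) \<longrightarrow> Phi ?N u w" if "m \<le> M" for m :: nat
      using that
    proof (induction m)
      case 0
      show ?case
      proof (intro allI impI)
        fix u assume h: "\<forall>i. 0 < i \<and> i \<le> M \<longrightarrow> u i \<notin> ?S"
        show "Phi ?N u w"
        proof (cases "\<exists>i j. i \<noteq> j \<and> i \<in> {1..M} \<and> j \<in> {1..M} \<and> u i = u j")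
          case True
          then obtain i j where ij: "i \<noteq> j" "i \<in> {1..M}" "j \<in> {1..M}" "u i = u j" by blast
          have "Vu ?N u = 0" by (rule Vu_zero[of i j]) (use ij in auto)
          moreover have "Gm ?N u w = 0" by (rule Gm_rows[of i j]) (use ij in auto)
          ultimately show ?thesis unfolding Phi_def by simp
        next
          case False
          show ?thesis
          proof (rule Phi_step[OF refl Suc.IH])
            show "\<And>i j. i \<in> {1..M} \<Longrightarrow> j \<in> {1..M} \<Longrightarrow> i \<noteq> j \<Longrightarrow> u i \<noteq> u j" using False by blast
            show "\<And>i j. i \<in> {1..?N} \<Longrightarrow> j \<in> {1..?N} \<Longrightarrow> i \<noteq> j \<Longrightarrow> w i \<noteq> w j" by (rule wd)
            show "u i \<noteq> -(f*w k)/e" if ik: "i \<in> {1..M}" "k \<in> {1..?N}" for i k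
            proof -
              have "u i \<notin> ?S" using h ik by auto
              moreover have "-(f*w k)/e \<in> ?S" using ik(2) by (rule imageI)
              ultimately show ?thesis by auto
            qed
          qed
        qed
      qed
    next
      case (Suc m)
      show ?case
      proof (intro allI impI)
        fix u assume h: "\<forall>i. Suc m < i \<and> i \<le> M \<longrightarrow> u i \<notin> ?S"
        let ?D = "\<lambda>y. Zbar t a b c d e f ?N (u(Suc m := y)) w * cc^(?N*(?N-1) div 2) * Vu ?N (u(Suc m := y)) * Ww ?N w - Pw ?N w * Gm ?N (u(Suc m := y)) w"
        obtain n where pfD: "pf ?D n" using Phi_diff_pf[of ?N u "Suc m" w] by blast
        have z: "?D y = 0" if y: "y \<notin> ?S" for y
        proof -
          have "\<forall>i. m < i \<and> i \<le> M \<longrightarrow> (u(Suc m := y)) i \<notin> ?S" using h y by auto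
          then have "Phi ?N (u(Suc m := y)) w" using Suc.IH Suc.prems by auto
          then show ?thesis unfolding Phi_def by simp
        qed
        have "?D (u (Suc m)) = 0" by (rule pf_cofinite[where B="?S", OF pfD _ z]) simp
        then show "Phi ?N u w" unfolding Phi_def by simp
      qed
    qed
    show ?thesis using claim[of M] by auto
  qed
qed

lemma tri_prod: "(\<Prod>j=1..(N::nat). \<Prod>k=j+1..N. (g j k :: complex)) = (\<Prod>k=1..N. \<Prod>j\<in>{1..<k}. g j k)"
proof (induction N)
  case 0 then show ?case by simp
next
  case (Suc N)
  have "(\<Prod>j=1..Suc N. \<Prod>k=j+1..Suc N. g j k) = (\<Prod>j=1..N. \<Prod>k=j+1..Suc N. g j k)"
    by (simp add: prod.cl_ivl_Suc)
  also have "\<dots> = (\<Prod>j=1..N. (\<Prod>k=j+1..N. g j k) * g j (Suc N))"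
    by (intro prod.cong refl) (simp add: prod.cl_ivl_Suc)
  also have "\<dots> = (\<Prod>j=1..N. \<Prod>k=j+1..N. g j k) * (\<Prod>j=1..N. g j (Suc N))"
    by (simp add: prod.distrib)
  also have "\<dots> = (\<Prod>k=1..Suc N. \<Prod>j\<in>{1..<k}. g j k)"
    unfolding Suc.IH by (simp add: prod.cl_ivl_Suc atLeastLessThanSuc_atLeastAtMost)
  finally show ?case .
qed

lemma main_sv:
  fixes N :: nat and u w :: "nat \<Rightarrow> complex"
  assumes "N \<ge> 1"
    and ud: "\<And>j k. j \<in> {1..N} \<Longrightarrow> k \<in> {1..N} \<Longrightarrow> j \<noteq> k \<Longrightarrow> u j \<noteq> u k"
    and wd: "\<And>j k. j \<in> {1..N} \<Longrightarrow> k \<in> {1..N} \<Longrightarrow> j \<noteq> k \<Longrightarrow> w j \<noteq> w k"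
    and nz: "\<And>j k. j \<in> {1..N} \<Longrightarrow> k \<in> {1..N} \<Longrightarrow> (a*t*u j + b*w k)*(e*u j + t*f*w k) \<noteq> 0"
  shows "Zbar t a b c d e f N u w =
    ((\<Prod>j=1..N. (1-t)*d*w j) * (\<Prod>j=1..N. \<Prod>k=1..N. (a*t*u j + b*w k)*(e*u j + t*f*w k)))
    / ((t^2*c*d)^(N*(N-1) div 2) * (\<Prod>j=1..N. \<Prod>k=j+1..N. (u j - u k)*(w k - w j)))
    * det (mat N N (\<lambda>(j,k). 1 / ((a*t*u (j+1) + b*w (k+1))*(e*u (j+1) + t*f*w (k+1)))))"
proof -
  let ?Dt = "det (mat N N (\<lambda>(j,k). 1 / ((a*t*u (j+1) + b*w (k+1))*(e*u (j+1) + t*f*w (k+1)))))"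
  let ?AA = "\<Prod>j=1..N. \<Prod>k=1..N. (a*t*u j + b*w k)*(e*u j + t*f*w k)"
  have phi: "Phi N u w" by (rule Phi_all)
  have V: "Vu N u \<noteq> 0" unfolding Vu_def using ud by (fastforce simp: prod_zero_iff)
  have W: "Ww N w \<noteq> 0" unfolding Ww_def using wd by (fastforce simp: prod_zero_iff)
  have C: "cc \<noteq> 0" unfolding cc_def using tnz cnz dnz by simp
  have tri: "(\<Prod>j=1..N. \<Prod>k=j+1..N. (u j - u k)*(w k - w j)) = Vu N u * Ww N w"
    unfolding Vu_def Ww_def tri_prod[where N=N and g="\<lambda>j k. (u j - u k)*(w k - w j)"] by (simp add: prod.distrib)
  have G: "Gm N u w = ?AA * ?Dt"
  proof -
    let ?r = "\<lambda>i. \<Prod>l\<in>{0..<N}. AB u w (Suc i) (Suc l)"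
    let ?B = "\<lambda>i k. 1 / AB u w (Suc i) (Suc k)"
    have "Gmat N u w = mat N N (\<lambda>(i,k). ?r i * ?B i k)"
    proof (rule eq_matI)
      fix i k assume "i < dim_row (mat N N (\<lambda>(i,k). ?r i * ?B i k))" "k < dim_col (mat N N (\<lambda>(i,k). ?r i * ?B i k))"
      then have ik: "i < N" "k < N" by auto
      have nzk: "AB u w (Suc i) (Suc k) \<noteq> 0" using nz[of "Suc i" "Suc k"] ik by (simp add: AB_def)
      have "?r i = AB u w (Suc i) (Suc k) * (\<Prod>l\<in>{0..<N}-{k}. AB u w (Suc i) (Suc l))"
        using ik prod.remove[of "{0..<N}" k "\<lambda>l. AB u w (Suc i) (Suc l)"] by simp
      then show "Gmat N u w $$ (i,k) = mat N N (\<lambda>(i,k). ?r i * ?B i k) $$ (i,k)"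
        using ik nzk by (simp add: Gmat_idx)
    qed (auto simp: Gmat_def)
    then have "Gm N u w = (\<Prod>i<N. ?r i) * det (mat N N (\<lambda>(i,k). ?B i k))"
      unfolding Gm_def by (simp only: det_rowscale)
    moreover have "(\<Prod>i<N. ?r i) = ?AA"
    proof -
      have "(\<Prod>i<N. ?r i) = (\<Prod>j=1..N. \<Prod>l\<in>{0..<N}. AB u w j (Suc l))"
        by (simp only: One_nat_def prod.atLeast1_atMost_eq)
      also have "\<dots> = (\<Prod>j=1..N. \<Prod>k=1..N. AB u w j k)"
        by (rule prod.cong[OF refl]) (simp only: One_nat_def prod.atLeast1_atMost_eq atLeast0LessThan)
      finally show ?thesis by (simp add: AB_def)
    qed
    moreover have "det (mat N N (\<lambda>(i,k). ?B i k)) = ?Dt"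
      by (simp add: AB_def Suc_eq_plus1)
    ultimately show ?thesis by simp
  qed
  have "Zbar t a b c d e f N u w * (cc^(N*(N-1) div 2) * (Vu N u * Ww N w)) = Pw N w * (?AA * ?Dt)"
    using phi unfolding Phi_def G by (simp add: mult.assoc)
  moreover have "cc^(N*(N-1) div 2) * (Vu N u * Ww N w) \<noteq> 0" using V W C by simp
  ultimately show ?thesis
    unfolding tri Pw_def[symmetric] cc_def[symmetric] by (simp add: field_simps)
qed

end

theorem mainTheorem10:
  fixes t a b c d e f :: complex and N :: nat and u w :: "nat \<Rightarrow> complex"
  assumes "t \<noteq> 0" "a \<noteq> 0" "b \<noteq> 0" "c \<noteq> 0" "d \<noteq> 0" "e \<noteq> 0" "f \<noteq> 0"
    and "t \<noteq> 1"
    and "c*d + a*f = 0" and "t*c*d + b*e = 0"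
    and "N \<ge> 1"
    and "\<And>j k. j \<in> {1..N} \<Longrightarrow> k \<in> {1..N} \<Longrightarrow> j \<noteq> k \<Longrightarrow> u j \<noteq> u k"
    and "\<And>j k. j \<in> {1..N} \<Longrightarrow> k \<in> {1..N} \<Longrightarrow> j \<noteq> k \<Longrightarrow> w j \<noteq> w k"
    and "\<And>j k. j \<in> {1..N} \<Longrightarrow> k \<in> {1..N} \<Longrightarrow> (a*t*u j + b*w k)*(e*u j + t*f*w k) \<noteq> 0"
  shows "Zbar t a b c d e f N u w =
    ((\<Prod>j=1..N. (1-t)*d*w j) * (\<Prod>j=1..N. \<Prod>k=1..N. (a*t*u j + b*w k)*(e*u j + t*f*w k)))
    / ((t^2*c*d)^(N*(N-1) div 2) * (\<Prod>j=1..N. \<Prod>k=j+1..N. (u j - u k)*(w k - w j)))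
    * det (mat N N (\<lambda>(j,k). 1 / ((a*t*u (j+1) + b*w (k+1))*(e*u (j+1) + t*f*w (k+1)))))"
proof -
  interpret sv t a b c d e f
    by unfold_locales (use assms in auto)
  show ?thesis by (rule main_sv) (use assms in auto)
qed


end
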